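(* During or after the execution of $\mathit{find\_ap\_set}$, let $xy$ be an edge of $H$ both of whose endpoints are even. If both $x$ and $y$ have been completely scanned, then $x$ and $y$ belong to the same blossom.
   Context: Let $H$ be a finite undirected graph with a matching $M_H$ (free vertices, $\mathit{mate}$, alternating and augmenting paths as usual). The procedure $\mathit{find\_ap\_set}$ maintains a search structure $S$ (a forest of alternating trees whose nodes are odd vertices and blossoms = sets of even vertices with a base; $b(x)$ denotes the base of the blossom containing an even vertex $x$) and a set $\mathit{CP}$ of vertex-disjoint augmenting paths, both initially empty. For each free vertex $f$ in turn: if $f$ is not on a path of $\mathit{CP}$, add $f$ to $S$ as the root of a new tree (a trivial even blossom) and call $\mathit{find\_ap}(f)$. The recursive call $\mathit{find\_ap}(x)$, for $x$ even, scans each non-matching edge $xy$ in turn: if $y\notin S$ and $y$ is free, add $xy$ to $S$, add the path formed by the canonical path of $x$ followed by $y$ to $\mathit{CP}$, and terminate every currently executing call of $\mathit{find\_ap}$ (the outer loop then continues with the next free vertex); if $y\notin S$ and $y$ is matched (grow step), add $y$ as odd child of $b(x)$ and $y'=\mathit{mate}(y)$ as even child of $y$, and call $\mathit{find\_ap}(y')$; if $y\in S$ and $b(y)$ is even and a proper descendant of $b(x)$ in $S$ (blossom step), let $u_1,\dots,u_k$ be the odd vertices on the tree path from $b(x)$ to $b(y)$ with $u_1$ closest to $b(x)$, merge all blossoms and odd vertices on this path into one blossom with base $b(x)$ (so $u_1,\dots,u_k$ become even), and call $\mathit{find\_ap}(u_1),\dots,\mathit{find\_ap}(u_k)$ in this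 order; otherwise do nothing. Vertices in $S$ remain in $S$ between trees. An even vertex $x$ is completely scanned if $\mathit{find\_ap}(x)$ has been called and was not terminated prematurely (so all non-matching edges at $x$ have been scanned). *)

theory Defs
  imports Main
begin

definition graph :: "'v set \<Rightarrow> ('v \<times> 'v) set \<Rightarrow> bool" where
  "graph V E \<longleftrightarrow> finite V \<and> E \<subseteq> V \<times> V \<and> sym E \<and> irrefl E"

definition matching :: "('v \<times> 'v) set \<Rightarrow> ('v \<times> 'v) set \<Rightarrow> bool" where
  "matching E M \<longleftrightarrow> M \<subseteq> E \<and> sym M \<and> (\<forall>v u w. (v,u) \<in> M \<longrightarrow> (v,w) \<in> M \<longrightarrow> u = w)"

definition matched :: "('v \<times> 'v) set \<Rightarrow> 'v \<Rightarrow> bool" where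
  "matched M v \<longleftrightarrow> (\<exists>u. (v,u) \<in> M)"

definition free :: "'v set \<Rightarrow> ('v \<times> 'v) set \<Rightarrow> 'v \<Rightarrow> bool" where
  "free V M v \<longleftrightarrow> v \<in> V \<and> \<not> matched M v"

definition mate :: "('v \<times> 'v) set \<Rightarrow> 'v \<Rightarrow> 'v" where
  "mate M v = (THE u. (v,u) \<in> M)"

(*  ev    : even vertices of S (vertices lying in blossoms)                *)
(*  base  : base v = b(v), the base of the blossom containing even v       *)
(*  opar  : for an odd vertex u, the even vertex x whose edge xu added u;  *)
(*          the parent blossom of u in S is the blossom b(opar u)          *)
(*          (the parent of a non-root blossom with base B is the odd       *)
(*          vertex mate B)                                                 *)
(*  cp    : the augmenting paths of CP, each recorded by its pair of       *)
(*          free end vertices (root of the tree, free vertex y)            *)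
(*  seen  : free vertices already handled by the outer loop                *)
(*  stack : the stack of executing / pending calls of find_ap:             *)
(*          Call x  = call find_ap(x) about to start;                      *)
(*          Scan x R = find_ap(x) executing, R = non-matching neighbours   *)
(*                     of x not yet scanned                                *)
(*  compl : even vertices x that are completely scanned                    *)

datatype 'v frame = Call 'v | Scan 'v "'v set"

record 'v state =
  ev    :: "'v set"
  od    :: "'v set"
  base  :: "'v \<Rightarrow> 'v"
  opar  :: "'v \<Rightarrow> 'v"
  root  :: 'v
  cp    :: "('v \<times> 'v) set"
  seen  :: "'v set"
  stack :: "'v frame list"
  compl :: "'v set"

definition inS :: "('v, 'a) state_scheme \<Rightarrow> 'v \<Rightarrow> bool" where
  "inS s v \<longleftrightarrow> v \<in> ev s \<or> v \<in> od s"

(* vertices lying on some path of CP: an alternating path's only free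
   vertices are its two ends, so for free vertices this is exact *)
definition on_cp :: "('v, 'a) state_scheme \<Rightarrow> 'v \<Rightarrow> bool" where
  "on_cp s v \<longleftrightarrow> (\<exists>a b. (a,b) \<in> cp s \<and> (v = a \<or> v = b))"

(* child relation between blossoms (identified by their bases):
   (B, B') means the blossom with base B is a grandchild of blossom B'
   in S, via the odd vertex mate B. *)
definition bchild :: "('v \<times> 'v) set \<Rightarrow> ('v, 'a) state_scheme \<Rightarrow> ('v \<times> 'v) set" where
  "bchild M s = {(B, base s (opar s (mate M B))) | B.
      B \<in> ev s \<and> base s B = B \<and> matched M B \<and> mate M B \<in> od s}"

definition init_state :: "'v state" where
  "init_state = \<lparr> ev = {}, od = {}, base = (\<lambda>v. v), opar = (\<lambda>v. v), root = undefined,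
                  cp = {}, seen = {}, stack = [], compl = {} \<rparr>"

inductive step :: "'v set \<Rightarrow> ('v \<times> 'v) set \<Rightarrow> ('v \<times> 'v) set \<Rightarrow> 'v state \<Rightarrow> 'v state \<Rightarrow> bool"
  for V :: "'v set" and E :: "('v \<times> 'v) set" and M :: "('v \<times> 'v) set" where
  outer_skip:
  "\<lbrakk> stack s = []; free V M f; f \<notin> seen s; on_cp s f \<rbrakk>
   \<Longrightarrow> step V E M s (s\<lparr> seen := insert f (seen s) \<rparr>)"
| outer_start:
  "\<lbrakk> stack s = []; free V M f; f \<notin> seen s; \<not> on_cp s f \<rbrakk>
   \<Longrightarrow> step V E M s (s\<lparr> seen := insert f (seen s), ev := insert f (ev s),
                         base := (base s)(f := f), root := f, stack := [Call f] \<rparr>)"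
| call:
  "stack s = Call x # rest
   \<Longrightarrow> step V E M s (s\<lparr> stack := Scan x {y. (x,y) \<in> E - M} # rest \<rparr>)"
| finish:
  "stack s = Scan x {} # rest
   \<Longrightarrow> step V E M s (s\<lparr> stack := rest, compl := insert x (compl s) \<rparr>)"
  (* scan xy, y not in S and free: augmenting path, terminate all calls *)
| augment:
  "\<lbrakk> stack s = Scan x R # rest; y \<in> R; \<not> inS s y; free V M y \<rbrakk>
   \<Longrightarrow> step V E M s (s\<lparr> od := insert y (od s), opar := (opar s)(y := x),
                         cp := insert (root s, y) (cp s), stack := [] \<rparr>)"
| grow:
  "\<lbrakk> stack s = Scan x R # rest; y \<in> R; \<not> inS s y; \<not> free V M y \<rbrakk>
   \<Longrightarrow> step V E M s (s\<lparr> od := insert y (od s), opar := (opar s)(y := x),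
                         ev := insert (mate M y) (ev s),
                         base := (base s)(mate M y := mate M y),
                         stack := Call (mate M y) # Scan x (R - {y}) # rest \<rparr>)"
  (* P = bases of the blossoms strictly below b(x) on the tree path to b(y);
     us = the odd vertices u_1,...,u_k on this path, u_1 closest to b(x). *)
| blossom:
  "\<lbrakk> stack s = Scan x R # rest; y \<in> R; y \<in> ev s;
     (base s y, base s x) \<in> (bchild M s)\<^sup>+;
     P = {B. (base s y, B) \<in> (bchild M s)\<^sup>* \<and> (B, base s x) \<in> (bchild M s)\<^sup>+};
     distinct us; set us = mate M ` P;
     \<forall>i j. i < j \<and> j < length us \<longrightarrow>
        (mate M (us ! j), mate M (us ! i)) \<in> (bchild M s)\<^sup>+ \<rbrakk>
   \<Longrightarrow> step V E M s (s\<lparr> ev := ev s \<union> set us, od := od s - set us,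
                         base := (\<lambda>z. if (z \<in> ev s \<and> (base s z \<in> P \<or> base s z = base s x))
                                          \<or> z \<in> set us then base s x else base s z),
                         stack := map Call us @ Scan x (R - {y}) # rest \<rparr>)"
| nothing:
  "\<lbrakk> stack s = Scan x R # rest; y \<in> R; inS s y;
     \<not> (y \<in> ev s \<and> (base s y, base s x) \<in> (bchild M s)\<^sup>+) \<rbrakk>
   \<Longrightarrow> step V E M s (s\<lparr> stack := Scan x (R - {y}) # rest \<rparr>)"

end

theory Submission
  imports Defs
begin

fun fv :: "'v frame \<Rightarrow> 'v" where
  "fv (Call v) = v" | "fv (Scan v R) = v"

section \<open>Matching basics\<close>

lemma mate_eq:
  assumes "matching E M" "(v,u) \<in> M" shows "mate M v = u"
  unfolding mate_def
proof (rule the_equality)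
  show "(v,u) \<in> M" by fact
  fix w assume "(v,w) \<in> M" then show "w = u" using assms unfolding matching_def by blast
qed

lemma matched_mate:
  assumes "matching E M" "matched M v" shows "(v, mate M v) \<in> M"
proof -
  obtain u where "(v,u) \<in> M" using assms(2) unfolding matched_def by blast
  then show ?thesis using mate_eq[OF assms(1)] by simp
qed

lemma mate_sym:
  assumes "matching E M" "matched M v" shows "(mate M v, v) \<in> M"
  using matched_mate[OF assms] assms(1) unfolding matching_def sym_def by blast

lemma mate_mate:
  assumes "matching E M" "matched M v" shows "mate M (mate M v) = v" "matched M (mate M v)"
  using mate_sym[OF assms] mate_eq[OF assms(1)] unfolding matched_def by blast+

lemma mate_inj:
  assumes "matching E M" "matched M a" "matched M b" "mate M a = mate M b" shows "a = b"
proof -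
  have "a = mate M (mate M a)" using mate_mate(1)[OF assms(1,2)] by simp
  also have "\<dots> = mate M (mate M b)" using assms(4) by simp
  also have "\<dots> = b" using mate_mate(1)[OF assms(1,3)] .
  finally show ?thesis .
qed

lemma mate_neq:
  assumes "graph V E" "matching E M" "matched M v" shows "mate M v \<noteq> v"
proof
  assume "mate M v = v"
  then have "(v,v) \<in> M" using matched_mate[OF assms(2,3)] by simp
  then have "(v,v) \<in> E" using assms(2) unfolding matching_def by blast
  then show False using assms(1) unfolding graph_def irrefl_def by blast
qed

lemma bchild_iff:
  "(B, p) \<in> bchild M s \<longleftrightarrow> B \<in> ev s \<and> base s B = B \<and> matched M B \<and> mate M B \<in> od s
     \<and> p = base s (opar s (mate M B))"
  unfolding bchild_def by auto

lemma bchild_fun: "(B, p) \<in> bchild M s \<Longrightarrow> (B, q) \<in> bchild M s \<Longrightarrow> p = q"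
  unfolding bchild_iff by simp

lemma EM_sym:
  assumes "graph V E" "matching E M" "(a,b) \<in> E - M" shows "(b,a) \<in> E - M"
  using assms unfolding graph_def matching_def sym_def by blast

lemma E_irrefl:
  assumes "graph V E" "(a,b) \<in> E" shows "a \<noteq> b"
  using assms unfolding graph_def irrefl_def by blast

lemma bchild_cong:
  "ev s' = ev s \<Longrightarrow> od s' = od s \<Longrightarrow> base s' = base s \<Longrightarrow> opar s' = opar s
   \<Longrightarrow> bchild M s' = bchild M s"
  by (simp add: bchild_def)

lemma split_stack:
  "map Call us @ Scan x R' # rest = pre @ Scan z R2 # post \<Longrightarrow>
   (pre = map Call us \<and> z = x \<and> R2 = R' \<and> post = rest) \<or>
   (\<exists>pre''. pre = map Call us @ Scan x R' # pre'' \<and> rest = pre'' @ Scan z R2 # post)"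
proof (induction us arbitrary: pre)
  case Nil
  then show ?case by (cases pre) auto
next
  case (Cons u us)
  then obtain pre0 where "pre = Call u # pre0" by (cases pre) auto
  with Cons show ?case by auto
qed

section \<open>Invariants\<close>

definition "iDisj s \<longleftrightarrow> ev s \<inter> od s = {}"
definition "iBase s \<longleftrightarrow> (\<forall>z\<in>ev s. base s z \<in> ev s \<and> base s (base s z) = base s z)"
definition "iOpar s \<longleftrightarrow> (\<forall>u\<in>od s. opar s u \<in> ev s)"
definition "iMateOd M s \<longleftrightarrow> (\<forall>u\<in>od s. matched M u \<longrightarrow> mate M u \<in> ev s \<and> base s (mate M u) = mate M u)"
definition "iClose M s \<longleftrightarrow> (\<forall>z. inS s z \<and> matched M z \<longrightarrow> inS s (mate M z))"
definition "iMateEv M s \<longleftrightarrow> (\<forall>z\<in>ev s. matched M z \<and> mate M z \<in> ev s \<longrightarrow> base s z = base s (mate M z))"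
definition "iCompl s \<longleftrightarrow> compl s \<subseteq> ev s"
definition "iFrames s \<longleftrightarrow> (\<forall>f\<in>set (stack s). fv f \<in> ev s)"
definition "iR E M s \<longleftrightarrow> (\<forall>x R y. Scan x R \<in> set (stack s) \<longrightarrow> y \<in> R \<longrightarrow> (x,y) \<in> E - M)"
definition "iFree M s \<longleftrightarrow> (\<forall>z. inS s z \<and> \<not> matched M z \<longrightarrow> z \<in> seen s \<or> on_cp s z)"
definition "iAcyc M s \<longleftrightarrow> (\<forall>a. (a,a) \<notin> (bchild M s)\<^sup>+)"
definition "iChain M s \<longleftrightarrow> sorted_wrt (\<lambda>a b. (base s a, base s b) \<in> (bchild M s)\<^sup>*) (map fv (stack s))"
definition "i0 E M s \<longleftrightarrow> (\<forall>x y. x \<in> compl s \<longrightarrow> (x,y) \<in> E - M \<longrightarrow> inS s y)"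
definition "i0' E M s \<longleftrightarrow> (\<forall>x R y. Scan x R \<in> set (stack s) \<longrightarrow> (x,y) \<in> E - M \<longrightarrow> y \<notin> R \<longrightarrow> inS s y)"
definition "i1 E M s \<longleftrightarrow> (\<forall>x y. x \<in> compl s \<longrightarrow> (x,y) \<in> E - M \<longrightarrow> y \<in> ev s \<longrightarrow>
   base s x = base s y \<or> (y \<notin> compl s \<and> (\<forall>R. Scan y R \<in> set (stack s) \<longrightarrow> x \<in> R)))"
definition "iB E M s \<longleftrightarrow> (\<forall>x y. x \<in> compl s \<longrightarrow> (x,y) \<in> E - M \<longrightarrow>
   (Call y \<in> set (stack s) \<or> (\<exists>R. Scan y R \<in> set (stack s) \<and> x \<in> R)) \<longrightarrow>
   (base s x, base s y) \<in> (bchild M s)\<^sup>*)"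
definition "iC E M s \<longleftrightarrow> (\<forall>u x f. u \<in> od s \<longrightarrow> matched M u \<longrightarrow> x \<in> compl s \<longrightarrow> (x,u) \<in> E - M \<longrightarrow>
   f \<in> set (stack s) \<longrightarrow> (mate M u, base s (fv f)) \<in> (bchild M s)\<^sup>+ \<longrightarrow>
   (base s x, base s (fv f)) \<in> (bchild M s)\<^sup>*)"
definition "iD E M s \<longleftrightarrow> (\<forall>pre y R post x. stack s = pre @ Scan y R # post \<longrightarrow> x \<in> ev s \<longrightarrow>
   (y,x) \<in> E - M \<longrightarrow> x \<notin> R \<longrightarrow> base s x = base s y \<or> x \<notin> fv ` set pre)"
definition "iE E M s \<longleftrightarrow> (\<forall>pre y R post x f. stack s = pre @ Scan y R # post \<longrightarrow> x \<in> od s \<longrightarrow>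
   matched M x \<longrightarrow> (y,x) \<in> E - M \<longrightarrow> x \<notin> R \<longrightarrow> f \<in> set pre \<longrightarrow>
   (mate M x, base s (fv f)) \<in> (bchild M s)\<^sup>+ \<longrightarrow> base s (fv f) = base s y)"

definition "invar E M s \<longleftrightarrow> iDisj s \<and> iBase s \<and> iOpar s \<and> iMateOd M s \<and> iClose M s \<and> iMateEv M s
  \<and> iCompl s \<and> iFrames s \<and> iR E M s \<and> iFree M s \<and> iAcyc M s \<and> iChain M s \<and> i0 E M s \<and> i0' E M s
  \<and> i1 E M s \<and> iB E M s \<and> iC E M s \<and> iD E M s \<and> iE E M s"

lemma invar_init: "invar E M init_state"
  unfolding invar_def iDisj_def iBase_def iOpar_def iMateOd_def iClose_def iMateEv_def iCompl_def
    iFrames_def iR_def iFree_def iAcyc_def iChain_def i0_def i0'_def i1_def iB_def iC_def iD_def iE_def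
  by (simp add: init_state_def bchild_def inS_def)

lemmas inv_defs = invar_def iDisj_def iBase_def iOpar_def iMateOd_def iClose_def iMateEv_def iCompl_def
    iFrames_def iR_def iFree_def iAcyc_def iChain_def i0_def i0'_def i1_def iB_def iC_def iD_def iE_def

lemma invarD:
  assumes "invar E M s"
  shows "iDisj s" "iBase s" "iOpar s" "iMateOd M s" "iClose M s" "iMateEv M s"
  "iCompl s" "iFrames s" "iR E M s" "iFree M s" "iAcyc M s" "iChain M s" "i0 E M s" "i0' E M s"
  "i1 E M s" "iB E M s" "iC E M s" "iD E M s" "iE E M s"
  using assms unfolding invar_def by simp_all

section \<open>Finish step\<close>

lemma finish_pres:
  assumes G: "graph V E" and Mt: "matching E M" and I: "invar E M s"
    and st: "stack s = Scan x {} # rest"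
  shows "invar E M (s\<lparr>stack := rest, compl := insert x (compl s)\<rparr>)"
proof -
  let ?s = "s\<lparr>stack := rest, compl := insert x (compl s)\<rparr>"
  note o = invarD[OF I]
  have bc: "bchild M ?s = bchild M s" by (simp add: bchild_def)
  have bs: "base ?s = base s" "ev ?s = ev s" "od ?s = od s" "stack ?s = rest"
    "compl ?s = insert x (compl s)" "inS ?s = inS s" "seen ?s = seen s" "on_cp ?s = on_cp s"
    by (simp_all add: inS_def[abs_def] on_cp_def[abs_def])
  have xev: "x \<in> ev s" using o(8) st unfolding iFrames_def by auto
  have chain': "\<And>f. f \<in> set rest \<Longrightarrow> (base s x, base s (fv f)) \<in> (bchild M s)\<^sup>*"
    using o(12) st unfolding iChain_def by simp
  have "iDisj ?s" using o(1) unfolding iDisj_def bs .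
  moreover have "iBase ?s" using o(2) unfolding iBase_def bs .
  moreover have "iOpar ?s" using o(3) unfolding iOpar_def bs by simp
  moreover have "iMateOd M ?s" using o(4) unfolding iMateOd_def bs .
  moreover have "iClose M ?s" using o(5) unfolding iClose_def bs .
  moreover have "iMateEv M ?s" using o(6) unfolding iMateEv_def bs .
  moreover have "iCompl ?s" using o(7) xev unfolding iCompl_def bs by simp
  moreover have "iFrames ?s" using o(8) st unfolding iFrames_def bs by simp
  moreover have "iR E M ?s" using o(9) st unfolding iR_def bs by simp
  moreover have "iFree M ?s" using o(10) unfolding iFree_def bs .
  moreover have "iAcyc M ?s" using o(11) unfolding iAcyc_def bc .
  moreover have "iChain M ?s" using o(12) st unfolding iChain_def bc bs by simp
  moreover have "i0 E M ?s"
  proof -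
    have "inS s y" if "(x,y) \<in> E - M" for y
      using o(14) st that unfolding i0'_def by simp
    then show ?thesis using o(13) unfolding i0_def bs by blast
  qed
  moreover have "i0' E M ?s" using o(14) st unfolding i0'_def bs by simp
  moreover have "i1 E M ?s"
    unfolding i1_def bs
  proof (intro allI impI)
    fix x2 y2 assume x2: "x2 \<in> insert x (compl s)" and e: "(x2, y2) \<in> E - M" and y2: "y2 \<in> ev s"
    have I1: "i1 E M s" by (fact o(15))
    show "base s x2 = base s y2 \<or> y2 \<notin> insert x (compl s) \<and> (\<forall>R. Scan y2 R \<in> set rest \<longrightarrow> x2 \<in> R)"
    proof (cases "base s x2 = base s y2")
      case True then show ?thesis by simp
    next
      case nb: False
      show ?thesis
      proof (cases "x2 = x")
        case True
        have "y2 \<noteq> x" using E_irrefl[OF G] e True by blast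
        moreover have "y2 \<notin> compl s"
        proof
          assume "y2 \<in> compl s"
          moreover have "(y2, x) \<in> E - M" using EM_sym[OF G Mt e] True by simp
          ultimately have "base s y2 = base s x \<or> (x \<notin> compl s \<and> (\<forall>R. Scan x R \<in> set (stack s) \<longrightarrow> y2 \<in> R))"
            using I1[unfolded i1_def, rule_format, of y2 x] xev by blast
          moreover have "Scan x {} \<in> set (stack s)" using st by simp
          ultimately show False using nb True by auto
        qed
        moreover have "x2 \<in> R" if sc: "Scan y2 R \<in> set rest" for R
        proof (rule ccontr)
          assume nR: "x2 \<notin> R"
          obtain pre post where "rest = pre @ Scan y2 R # post" using split_list[OF sc] by blast
          then have "stack s = (Scan x {} # pre) @ Scan y2 R # post" using st by simp
          moreover have "(y2, x2) \<in> E - M" using EM_sym[OF G Mt e] .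
          ultimately have "base s x2 = base s y2 \<or> x2 \<notin> fv ` set (Scan x {} # pre)"
            using o(18)[unfolded iD_def, rule_format, of "Scan x {} # pre" y2 R post x2] nR xev True by simp
          then show False using nb True by simp
        qed
        ultimately show ?thesis by blast
      next
        case False
        then have "x2 \<in> compl s" using x2 by simp
        then have h12: "y2 \<notin> compl s \<and> (\<forall>R. Scan y2 R \<in> set (stack s) \<longrightarrow> x2 \<in> R)"
          using I1[unfolded i1_def, rule_format, of x2 y2] e y2 nb by blast
        moreover have "y2 \<noteq> x"
        proof
          assume "y2 = x"
          moreover have "Scan x {} \<in> set (stack s)" using st by simp
          ultimately show False using h12 by auto
        qed
        ultimately show ?thesis using st by simp
      qed
    qed
  qed
  moreover have "iB E M ?s"
    unfolding iB_def bs bc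
  proof (intro allI impI)
    fix x2 y2 assume x2: "x2 \<in> insert x (compl s)" and e: "(x2, y2) \<in> E - M"
      and fr: "Call y2 \<in> set rest \<or> (\<exists>R. Scan y2 R \<in> set rest \<and> x2 \<in> R)"
    show "(base s x2, base s y2) \<in> (bchild M s)\<^sup>*"
    proof (cases "x2 = x")
      case True
      from fr obtain f where "f \<in> set rest" "fv f = y2" by force
      then show ?thesis using chain' True by force
    next
      case False
      then have "x2 \<in> compl s" using x2 by simp
      moreover have "Call y2 \<in> set (stack s) \<or> (\<exists>R. Scan y2 R \<in> set (stack s) \<and> x2 \<in> R)"
        using fr st by auto
      ultimately show ?thesis using o(16)[unfolded iB_def, rule_format, of x2 y2] e by blast
    qed
  qed
  moreover have "iC E M ?s"
    unfolding iC_def bs bc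
  proof (intro allI impI)
    fix u x2 f assume u: "u \<in> od s" "matched M u" and x2: "x2 \<in> insert x (compl s)"
      and e: "(x2, u) \<in> E - M" and f: "f \<in> set rest"
      and r: "(mate M u, base s (fv f)) \<in> (bchild M s)\<^sup>+"
    show "(base s x2, base s (fv f)) \<in> (bchild M s)\<^sup>*"
    proof (cases "x2 = x")
      case True
      then show ?thesis using chain' f by simp
    next
      case False
      then have "x2 \<in> compl s" using x2 by simp
      moreover have "f \<in> set (stack s)" using f st by simp
      ultimately show ?thesis using o(17)[unfolded iC_def, rule_format, of u x2 f] e u r by blast
    qed
  qed
  moreover have "iD E M ?s"
    unfolding iD_def bs
  proof (intro allI impI)
    fix pre y R post x2 assume h: "rest = pre @ Scan y R # post" "x2 \<in> ev s" "(y, x2) \<in> E - M" "x2 \<notin> R"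
    then have "stack s = (Scan x {} # pre) @ Scan y R # post" using st by simp
    then have "base s x2 = base s y \<or> x2 \<notin> fv ` set (Scan x {} # pre)"
      using o(18)[unfolded iD_def, rule_format, of "Scan x {} # pre" y R post x2] h by blast
    then show "base s x2 = base s y \<or> x2 \<notin> fv ` set pre" by auto
  qed
  moreover have "iE E M ?s"
    unfolding iE_def bs bc
  proof (intro allI impI)
    fix pre y R post x2 f assume h: "rest = pre @ Scan y R # post" "x2 \<in> od s" "matched M x2"
      "(y, x2) \<in> E - M" "x2 \<notin> R" "f \<in> set pre" "(mate M x2, base s (fv f)) \<in> (bchild M s)\<^sup>+"
    then have "stack s = (Scan x {} # pre) @ Scan y R # post" using st by simp
    moreover have "f \<in> set (Scan x {} # pre)" using h by simp
    ultimately show "base s (fv f) = base s y"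
      using o(19)[unfolded iE_def, rule_format, of "Scan x {} # pre" y R post x2 f] h by blast
  qed
  ultimately show ?thesis unfolding invar_def by blast
qed


lemma bchild_dom: "(a,b) \<in> bchild M s \<Longrightarrow> a \<in> ev s"
  unfolding bchild_iff by simp

lemma bchild_ran: "iBase s \<Longrightarrow> iOpar s \<Longrightarrow> (a,b) \<in> bchild M s \<Longrightarrow> b \<in> ev s"
  unfolding bchild_iff iBase_def iOpar_def by auto

lemma bchild_trancl_ran: "iBase s \<Longrightarrow> iOpar s \<Longrightarrow> (a,b) \<in> (bchild M s)\<^sup>+ \<Longrightarrow> b \<in> ev s"
  by (erule tranclE) (auto intro: bchild_ran)

lemma bchild_trancl_dom: "(a,b) \<in> (bchild M s)\<^sup>+ \<Longrightarrow> a \<in> ev s"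
  by (induction rule: trancl.induct) (auto intro: bchild_dom)

section \<open>Call step\<close>

lemma call_pres:
  assumes G: "graph V E" and Mt: "matching E M" and I: "invar E M s"
    and st: "stack s = Call x # rest"
  shows "invar E M (s\<lparr>stack := Scan x {y. (x,y) \<in> E - M} # rest\<rparr>)"
proof -
  define Rf where "Rf = {y. (x,y) \<in> E - M}"
  let ?s = "s\<lparr>stack := Scan x Rf # rest\<rparr>"
  note o = invarD[OF I]
  have bc: "bchild M ?s = bchild M s" by (simp add: bchild_def)
  have bs: "base ?s = base s" "ev ?s = ev s" "od ?s = od s" "stack ?s = Scan x Rf # rest"
    "compl ?s = compl s" "inS ?s = inS s" "seen ?s = seen s" "on_cp ?s = on_cp s" "opar ?s = opar s"
    by (simp_all add: inS_def[abs_def] on_cp_def[abs_def])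
  have fvs: "map fv (stack ?s) = map fv (stack s)" using st by simp
  have fr: "\<And>f. f \<in> set (stack ?s) \<Longrightarrow> \<exists>f0\<in>set (stack s). fv f0 = fv f"
    using st by auto
  have "iDisj ?s" using o(1) unfolding iDisj_def bs .
  moreover have "iBase ?s" using o(2) unfolding iBase_def bs .
  moreover have "iOpar ?s" using o(3) unfolding iOpar_def bs .
  moreover have "iMateOd M ?s" using o(4) unfolding iMateOd_def bs .
  moreover have "iClose M ?s" using o(5) unfolding iClose_def bs .
  moreover have "iMateEv M ?s" using o(6) unfolding iMateEv_def bs .
  moreover have "iCompl ?s" using o(7) unfolding iCompl_def bs .
  moreover have "iFrames ?s" using o(8) st unfolding iFrames_def bs by simp
  moreover have "iR E M ?s" using o(9) st unfolding iR_def bs Rf_def by auto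
  moreover have "iFree M ?s" using o(10) unfolding iFree_def bs .
  moreover have "iAcyc M ?s" using o(11) unfolding iAcyc_def bc .
  moreover have "iChain M ?s" using o(12) unfolding iChain_def bc bs fvs[unfolded bs] .
  moreover have "i0 E M ?s" using o(13) unfolding i0_def bs .
  moreover have "i0' E M ?s" using o(14) st unfolding i0'_def bs Rf_def by (auto simp: inS_def)
  moreover have "i1 E M ?s"
    unfolding i1_def bs
  proof (intro allI impI)
    fix x2 y2 assume x2: "x2 \<in> compl s" and e: "(x2, y2) \<in> E - M" and y2: "y2 \<in> ev s"
    have h: "base s x2 = base s y2 \<or> (y2 \<notin> compl s \<and> (\<forall>R. Scan y2 R \<in> set (stack s) \<longrightarrow> x2 \<in> R))"
      using o(15)[unfolded i1_def, rule_format, of x2 y2] x2 e y2 by blast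
    have "x2 \<in> Rf" if "y2 = x" using EM_sym[OF G Mt e] that unfolding Rf_def by simp
    then show "base s x2 = base s y2 \<or> (y2 \<notin> compl s \<and> (\<forall>R. Scan y2 R \<in> set (Scan x Rf # rest) \<longrightarrow> x2 \<in> R))"
      using h st by auto
  qed
  moreover have "iB E M ?s"
    unfolding iB_def bs bc
  proof (intro allI impI)
    fix x2 y2 assume x2: "x2 \<in> compl s" and e: "(x2, y2) \<in> E - M"
      and f: "Call y2 \<in> set (Scan x Rf # rest) \<or> (\<exists>R. Scan y2 R \<in> set (Scan x Rf # rest) \<and> x2 \<in> R)"
    have "Call y2 \<in> set (stack s) \<or> (\<exists>R. Scan y2 R \<in> set (stack s) \<and> x2 \<in> R)"
      using f st by auto
    then show "(base s x2, base s y2) \<in> (bchild M s)\<^sup>*"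
      using o(16)[unfolded iB_def, rule_format, of x2 y2] x2 e by blast
  qed
  moreover have "iC E M ?s"
    unfolding iC_def bs bc
  proof (intro allI impI)
    fix u x2 f assume h: "u \<in> od s" "matched M u" "x2 \<in> compl s" "(x2, u) \<in> E - M"
      "f \<in> set (Scan x Rf # rest)" "(mate M u, base s (fv f)) \<in> (bchild M s)\<^sup>+"
    obtain f0 where "f0 \<in> set (stack s)" "fv f0 = fv f" using fr h(5) by auto
    then show "(base s x2, base s (fv f)) \<in> (bchild M s)\<^sup>*"
      using o(17)[unfolded iC_def, rule_format, of u x2 f0] h by simp
  qed
  moreover have "iD E M ?s"
    unfolding iD_def bs
  proof (intro allI impI)
    fix pre y R post x2 assume h: "Scan x Rf # rest = pre @ Scan y R # post" "x2 \<in> ev s"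
      "(y, x2) \<in> E - M" "x2 \<notin> R"
    from split_stack[of "[]" x Rf rest pre y R post] h(1)
    consider "pre = [] \<and> y = x \<and> R = Rf \<and> post = rest"
      | pre'' where "pre = Scan x Rf # pre''" "rest = pre'' @ Scan y R # post" by auto
    then show "base s x2 = base s y \<or> x2 \<notin> fv ` set pre"
    proof cases
      case 1
      then show ?thesis using h unfolding Rf_def by simp
    next
      case 2
      then have "stack s = (Call x # pre'') @ Scan y R # post" using st by simp
      then have "base s x2 = base s y \<or> x2 \<notin> fv ` set (Call x # pre'')"
        using o(18)[unfolded iD_def, rule_format, of "Call x # pre''" y R post x2] h by simp
      then show ?thesis using 2 by simp
    qed
  qed
  moreover have "iE E M ?s"
    unfolding iE_def bs bc
  proof (intro allI impI)
    fix pre y R post x2 f assume h: "Scan x Rf # rest = pre @ Scan y R # post" "x2 \<in> od s" "matched M x2"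
      "(y, x2) \<in> E - M" "x2 \<notin> R" "f \<in> set pre" "(mate M x2, base s (fv f)) \<in> (bchild M s)\<^sup>+"
    from split_stack[of "[]" x Rf rest pre y R post] h(1)
    consider "pre = [] \<and> y = x \<and> R = Rf \<and> post = rest"
      | pre'' where "pre = Scan x Rf # pre''" "rest = pre'' @ Scan y R # post" by auto
    then show "base s (fv f) = base s y"
    proof cases
      case 1
      then show ?thesis using h by simp
    next
      case 2
      then have st2: "stack s = (Call x # pre'') @ Scan y R # post" using st by simp
      have "\<exists>f0\<in>set (Call x # pre''). fv f0 = fv f"
      proof (cases "f \<in> set pre''")
        case True then show ?thesis by auto
      next
        case False then have "f = Scan x Rf" using 2 h(6) by simp
        then show ?thesis by (intro bexI[of _ "Call x"]) simp_all
      qed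
      then obtain f0 where f0: "f0 \<in> set (Call x # pre'')" "fv f0 = fv f" by blast
      show ?thesis
        using o(19)[unfolded iE_def, rule_format, of "Call x # pre''" y R post x2 f0] st2 f0 h by simp
    qed
  qed
  ultimately show ?thesis unfolding invar_def Rf_def by blast
qed

section \<open>Nothing step\<close>

lemma nothing_pres:
  assumes G: "graph V E" and Mt: "matching E M" and I: "invar E M s"
    and st: "stack s = Scan x R # rest" and yR: "y \<in> R" and yS: "inS s y"
    and nd: "\<not> (y \<in> ev s \<and> (base s y, base s x) \<in> (bchild M s)\<^sup>+)"
  shows "invar E M (s\<lparr>stack := Scan x (R - {y}) # rest\<rparr>)"
proof -
  let ?s = "s\<lparr>stack := Scan x (R - {y}) # rest\<rparr>"
  note o = invarD[OF I]
  have bc: "bchild M ?s = bchild M s" by (simp add: bchild_def)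
  have bs: "base ?s = base s" "ev ?s = ev s" "od ?s = od s" "stack ?s = Scan x (R - {y}) # rest"
    "compl ?s = compl s" "inS ?s = inS s" "seen ?s = seen s" "on_cp ?s = on_cp s" "opar ?s = opar s"
    by (simp_all add: inS_def[abs_def] on_cp_def[abs_def])
  have fvs: "map fv (stack ?s) = map fv (stack s)" using st by simp
  have fr: "\<And>f. f \<in> set (stack ?s) \<Longrightarrow> \<exists>f0\<in>set (stack s). fv f0 = fv f"
    using st by auto
  have exy: "(x,y) \<in> E - M" using o(9) st yR unfolding iR_def by simp
  have "iDisj ?s" using o(1) unfolding iDisj_def bs .
  moreover have "iBase ?s" using o(2) unfolding iBase_def bs .
  moreover have "iOpar ?s" using o(3) unfolding iOpar_def bs .
  moreover have "iMateOd M ?s" using o(4) unfolding iMateOd_def bs .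
  moreover have "iClose M ?s" using o(5) unfolding iClose_def bs .
  moreover have "iMateEv M ?s" using o(6) unfolding iMateEv_def bs .
  moreover have "iCompl ?s" using o(7) unfolding iCompl_def bs .
  moreover have "iFrames ?s" using o(8) st unfolding iFrames_def bs by simp
  moreover have "iR E M ?s" using o(9) st unfolding iR_def bs by auto
  moreover have "iFree M ?s" using o(10) unfolding iFree_def bs .
  moreover have "iAcyc M ?s" using o(11) unfolding iAcyc_def bc .
  moreover have "iChain M ?s" using o(12) unfolding iChain_def bc bs fvs[unfolded bs] .
  moreover have "i0 E M ?s" using o(13) unfolding i0_def bs .
  moreover have "i0' E M ?s" using o(14) st yS unfolding i0'_def bs by auto
  moreover have "i1 E M ?s"
    unfolding i1_def bs
  proof (intro allI impI)
    fix x2 y2 assume x2: "x2 \<in> compl s" and e: "(x2, y2) \<in> E - M" and y2: "y2 \<in> ev s"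
    show "base s x2 = base s y2 \<or> (y2 \<notin> compl s \<and> (\<forall>R'. Scan y2 R' \<in> set (Scan x (R - {y}) # rest) \<longrightarrow> x2 \<in> R'))"
    proof (cases "x2 = y \<and> y2 = x")
      case True
      have "Scan x R \<in> set (stack s)" using st by simp
      then have "(base s y, base s x) \<in> (bchild M s)\<^sup>*"
        using o(16)[unfolded iB_def, rule_format, of y x] x2 e True yR by blast
      moreover have "y \<in> ev s" using o(7) x2 True unfolding iCompl_def by auto
      ultimately have "base s y = base s x" using nd by (auto simp: rtrancl_eq_or_trancl)
      then show ?thesis using True by simp
    next
      case False
      have h: "base s x2 = base s y2 \<or> (y2 \<notin> compl s \<and> (\<forall>R. Scan y2 R \<in> set (stack s) \<longrightarrow> x2 \<in> R))"
        using o(15)[unfolded i1_def, rule_format, of x2 y2] x2 e y2 by blast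
      then show ?thesis using st False by auto
    qed
  qed
  moreover have "iB E M ?s"
    unfolding iB_def bs bc
  proof (intro allI impI)
    fix x2 y2 assume x2: "x2 \<in> compl s" and e: "(x2, y2) \<in> E - M"
      and f: "Call y2 \<in> set (Scan x (R - {y}) # rest) \<or> (\<exists>R'. Scan y2 R' \<in> set (Scan x (R - {y}) # rest) \<and> x2 \<in> R')"
    have "Call y2 \<in> set (stack s) \<or> (\<exists>R. Scan y2 R \<in> set (stack s) \<and> x2 \<in> R)"
      using f st by auto
    then show "(base s x2, base s y2) \<in> (bchild M s)\<^sup>*"
      using o(16)[unfolded iB_def, rule_format, of x2 y2] x2 e by blast
  qed
  moreover have "iC E M ?s"
    unfolding iC_def bs bc
  proof (intro allI impI)
    fix u x2 f assume h: "u \<in> od s" "matched M u" "x2 \<in> compl s" "(x2, u) \<in> E - M"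
      "f \<in> set (Scan x (R - {y}) # rest)" "(mate M u, base s (fv f)) \<in> (bchild M s)\<^sup>+"
    obtain f0 where "f0 \<in> set (stack s)" "fv f0 = fv f" using fr h(5) by auto
    then show "(base s x2, base s (fv f)) \<in> (bchild M s)\<^sup>*"
      using o(17)[unfolded iC_def, rule_format, of u x2 f0] h by simp
  qed
  moreover have "iD E M ?s"
    unfolding iD_def bs
  proof (intro allI impI)
    fix pre y2 R2 post x2 assume h: "Scan x (R - {y}) # rest = pre @ Scan y2 R2 # post" "x2 \<in> ev s"
      "(y2, x2) \<in> E - M" "x2 \<notin> R2"
    from split_stack[of "[]" x "R - {y}" rest pre y2 R2 post] h(1)
    consider "pre = [] \<and> y2 = x \<and> R2 = R - {y} \<and> post = rest"
      | pre'' where "pre = Scan x (R - {y}) # pre''" "rest = pre'' @ Scan y2 R2 # post" by auto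
    then show "base s x2 = base s y2 \<or> x2 \<notin> fv ` set pre"
    proof cases
      case 1
      then show ?thesis by simp
    next
      case 2
      then have "stack s = (Scan x R # pre'') @ Scan y2 R2 # post" using st by simp
      then have "base s x2 = base s y2 \<or> x2 \<notin> fv ` set (Scan x R # pre'')"
        using o(18)[unfolded iD_def, rule_format, of "Scan x R # pre''" y2 R2 post x2] h by simp
      then show ?thesis using 2 by simp
    qed
  qed
  moreover have "iE E M ?s"
    unfolding iE_def bs bc
  proof (intro allI impI)
    fix pre y2 R2 post x2 f assume h: "Scan x (R - {y}) # rest = pre @ Scan y2 R2 # post" "x2 \<in> od s"
      "matched M x2" "(y2, x2) \<in> E - M" "x2 \<notin> R2" "f \<in> set pre"
      "(mate M x2, base s (fv f)) \<in> (bchild M s)\<^sup>+"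
    from split_stack[of "[]" x "R - {y}" rest pre y2 R2 post] h(1)
    consider "pre = [] \<and> y2 = x \<and> R2 = R - {y} \<and> post = rest"
      | pre'' where "pre = Scan x (R - {y}) # pre''" "rest = pre'' @ Scan y2 R2 # post" by auto
    then show "base s (fv f) = base s y2"
    proof cases
      case 1
      then show ?thesis using h by simp
    next
      case 2
      then have st2: "stack s = (Scan x R # pre'') @ Scan y2 R2 # post" using st by simp
      have "\<exists>f0\<in>set (Scan x R # pre''). fv f0 = fv f"
      proof (cases "f \<in> set pre''")
        case True then show ?thesis by auto
      next
        case False then have "f = Scan x (R - {y})" using 2 h(6) by simp
        then show ?thesis by (intro bexI[of _ "Scan x R"]) simp_all
      qed
      then obtain f0 where f0: "f0 \<in> set (Scan x R # pre'')" "fv f0 = fv f" by blast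
      show ?thesis
        using o(19)[unfolded iE_def, rule_format, of "Scan x R # pre''" y2 R2 post x2 f0] st2 f0 h by simp
    qed
  qed
  ultimately show ?thesis unfolding invar_def by blast
qed


lemma skip_pres:
  assumes I: "invar E M s"
  shows "invar E M (s\<lparr>seen := insert f (seen s)\<rparr>)"
proof -
  let ?s = "s\<lparr>seen := insert f (seen s)\<rparr>"
  note o = invarD[OF I]
  have bc: "bchild M ?s = bchild M s" by (simp add: bchild_def)
  have bs: "base ?s = base s" "ev ?s = ev s" "od ?s = od s" "stack ?s = stack s"
    "compl ?s = compl s" "inS ?s = inS s" "seen ?s = insert f (seen s)" "on_cp ?s = on_cp s" "opar ?s = opar s"
    by (simp_all add: inS_def[abs_def] on_cp_def[abs_def])
  have "iFree M ?s" using o(10) unfolding iFree_def bs by auto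
  then show ?thesis using o unfolding invar_def
    iDisj_def iBase_def iOpar_def iMateOd_def iClose_def iMateEv_def iCompl_def
    iFrames_def iR_def iAcyc_def iChain_def i0_def i0'_def i1_def iB_def iC_def iD_def iE_def bs bc
    by blast
qed

section \<open>Augment step\<close>

lemma augment_pres:
  assumes G: "graph V E" and Mt: "matching E M" and I: "invar E M s"
    and st: "stack s = Scan x R # rest" and yR: "y \<in> R" and yS: "\<not> inS s y" and fr: "free V M y"
  shows "invar E M (s\<lparr> od := insert y (od s), opar := (opar s)(y := x),
                         cp := insert (root s, y) (cp s), stack := [] \<rparr>)"
proof -
  let ?s = "s\<lparr> od := insert y (od s), opar := (opar s)(y := x),
                         cp := insert (root s, y) (cp s), stack := [] \<rparr>"
  note o = invarD[OF I]
  have ny: "\<not> matched M y" using fr unfolding free_def by simp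
  have yev: "y \<notin> ev s" "y \<notin> od s" using yS unfolding inS_def by auto
  have xev: "x \<in> ev s" using o(8) st unfolding iFrames_def by simp
  have mB: "mate M B \<noteq> y" if "matched M B" for B
    using mate_sym[OF Mt that] ny unfolding matched_def by blast
  have bc: "bchild M ?s = bchild M s"
    unfolding bchild_def using mB by auto
  have bs: "base ?s = base s" "ev ?s = ev s" "od ?s = insert y (od s)" "stack ?s = []"
    "compl ?s = compl s" "seen ?s = seen s" "opar ?s = (opar s)(y := x)"
    "cp ?s = insert (root s, y) (cp s)"
    by simp_all
  have inS': "inS ?s z \<longleftrightarrow> inS s z \<or> z = y" for z unfolding inS_def by auto
  have "iDisj ?s" using o(1) yev unfolding iDisj_def bs by auto
  moreover have "iBase ?s" using o(2) unfolding iBase_def bs .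
  moreover have "iOpar ?s" using o(3) xev unfolding iOpar_def bs by auto
  moreover have "iMateOd M ?s" using o(4) ny unfolding iMateOd_def bs by auto
  moreover have "iClose M ?s" using o(5) ny unfolding iClose_def inS' by auto
  moreover have "iMateEv M ?s" using o(6) unfolding iMateEv_def bs .
  moreover have "iCompl ?s" using o(7) unfolding iCompl_def bs .
  moreover have "iFrames ?s" unfolding iFrames_def bs by simp
  moreover have "iR E M ?s" unfolding iR_def bs by simp
  moreover have "iFree M ?s" using o(10) unfolding iFree_def inS' bs on_cp_def by auto
  moreover have "iAcyc M ?s" using o(11) unfolding iAcyc_def bc .
  moreover have "iChain M ?s" unfolding iChain_def bs by simp
  moreover have "i0 E M ?s" using o(13) unfolding i0_def inS' bs by auto
  moreover have "i0' E M ?s" unfolding i0'_def bs by simp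
  moreover have "i1 E M ?s" using o(15) unfolding i1_def bs by auto
  moreover have "iB E M ?s" unfolding iB_def bs by simp
  moreover have "iC E M ?s" unfolding iC_def bs by simp
  moreover have "iD E M ?s" unfolding iD_def bs by simp
  moreover have "iE E M ?s" unfolding iE_def bs by simp
  ultimately show ?thesis unfolding invar_def by blast
qed

section \<open>Outer start\<close>

lemma start_pres:
  assumes G: "graph V E" and Mt: "matching E M" and I: "invar E M s"
    and st: "stack s = []" and fr: "free V M f" and fs: "f \<notin> seen s" and fc: "\<not> on_cp s f"
  shows "invar E M (s\<lparr> seen := insert f (seen s), ev := insert f (ev s),
                         base := (base s)(f := f), root := f, stack := [Call f] \<rparr>)"
proof -
  let ?s = "s\<lparr> seen := insert f (seen s), ev := insert f (ev s),
                         base := (base s)(f := f), root := f, stack := [Call f] \<rparr>"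
  note o = invarD[OF I]
  have nf: "\<not> matched M f" using fr unfolding free_def by simp
  have fS: "\<not> inS s f" using o(10) nf fs fc unfolding iFree_def by blast
  have fev: "f \<notin> ev s" "f \<notin> od s" using fS unfolding inS_def by auto
  have mB: "mate M B \<noteq> f" if "matched M B" for B
    using mate_sym[OF Mt that] nf unfolding matched_def by blast
  have bsame: "((base s)(f := f)) z = base s z" if "z \<in> ev s" for z using that fev by auto
  have obase: "base s z \<in> ev s" if "z \<in> ev s" for z using o(2) that unfolding iBase_def by auto
  have oopar: "opar s u \<in> ev s" if "u \<in> od s" for u using o(3) that unfolding iOpar_def by auto
  have bc: "bchild M ?s = bchild M s"
  proof -
    have "(B, p) \<in> bchild M ?s \<longleftrightarrow> (B, p) \<in> bchild M s" for B p
    proof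
      assume "(B, p) \<in> bchild M ?s"
      then have h: "B \<in> insert f (ev s)" "((base s)(f := f)) B = B" "matched M B" "mate M B \<in> od s"
        "p = ((base s)(f := f)) (opar s (mate M B))"
        unfolding bchild_iff by simp_all
      then have "B \<in> ev s" using nf by auto
      then show "(B, p) \<in> bchild M s" using h bsame[OF oopar[OF h(4)]] bsame[of B]
        unfolding bchild_iff by simp
    next
      assume "(B, p) \<in> bchild M s"
      then have h: "B \<in> ev s" "base s B = B" "matched M B" "mate M B \<in> od s"
        "p = base s (opar s (mate M B))"
        unfolding bchild_iff by simp_all
      then show "(B, p) \<in> bchild M ?s" using bsame[OF oopar[OF h(4)]] bsame[of B]
        unfolding bchild_iff by simp
    qed
    then show ?thesis by auto
  qed
  have bs: "ev ?s = insert f (ev s)" "od ?s = od s" "stack ?s = [Call f]"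
    "compl ?s = compl s" "seen ?s = insert f (seen s)" "opar ?s = opar s"
    "cp ?s = cp s" "base ?s = (base s)(f := f)"
    by simp_all
  have inS': "inS ?s z \<longleftrightarrow> inS s z \<or> z = f" for z unfolding inS_def by auto
  have noadj: "(x, f) \<notin> E - M" if "x \<in> compl s" for x
    using o(13) that fS unfolding i0_def by blast
  have "iDisj ?s" using o(1) fev unfolding iDisj_def bs by auto
  moreover have "iBase ?s"
    unfolding iBase_def bs
  proof
    fix z assume "z \<in> insert f (ev s)"
    then show "((base s)(f := f)) z \<in> insert f (ev s) \<and> ((base s)(f := f)) (((base s)(f := f)) z) = ((base s)(f := f)) z"
    proof
      assume "z = f" then show ?thesis by simp
    next
      assume z: "z \<in> ev s"
      then show ?thesis using o(2) bsame[OF z] bsame[OF obase[OF z]] unfolding iBase_def by auto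
    qed
  qed
  moreover have "iOpar ?s" using o(3) unfolding iOpar_def bs by auto
  moreover have "iMateOd M ?s"
    unfolding iMateOd_def bs
  proof (intro ballI impI)
    fix u assume u: "u \<in> od s" "matched M u"
    then have "mate M u \<in> ev s \<and> base s (mate M u) = mate M u" using o(4) unfolding iMateOd_def by auto
    then show "mate M u \<in> insert f (ev s) \<and> ((base s)(f := f)) (mate M u) = mate M u"
      using bsame by auto
  qed
  moreover have "iClose M ?s" using o(5) nf unfolding iClose_def inS' by auto
  moreover have "iMateEv M ?s"
    unfolding iMateEv_def bs
  proof (intro ballI impI)
    fix z assume z: "z \<in> insert f (ev s)" "matched M z \<and> mate M z \<in> insert f (ev s)"
    then have zf: "z \<noteq> f" "mate M z \<noteq> f" using nf mB by auto
    then have "z \<in> ev s" "mate M z \<in> ev s" using z by auto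
    then show "((base s)(f := f)) z = ((base s)(f := f)) (mate M z)"
      using o(6) z zf unfolding iMateEv_def by auto
  qed
  moreover have "iCompl ?s" using o(7) unfolding iCompl_def bs by auto
  moreover have "iFrames ?s" unfolding iFrames_def bs by simp
  moreover have "iR E M ?s" unfolding iR_def bs by simp
  moreover have "iFree M ?s" using o(10) unfolding iFree_def inS' bs on_cp_def by auto
  moreover have "iAcyc M ?s" using o(11) unfolding iAcyc_def bc .
  moreover have "iChain M ?s" unfolding iChain_def bs by simp
  moreover have "i0 E M ?s" using o(13) unfolding i0_def inS' bs by auto
  moreover have "i0' E M ?s" unfolding i0'_def bs by simp
  moreover have "i1 E M ?s"
    unfolding i1_def bs
  proof (intro allI impI)
    fix x2 y2 assume h: "x2 \<in> compl s" "(x2, y2) \<in> E - M" "y2 \<in> insert f (ev s)"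
    then have "y2 \<noteq> f" using noadj by blast
    then have y2: "y2 \<in> ev s" using h by simp
    have x2: "x2 \<in> ev s" using o(7) h unfolding iCompl_def by auto
    have "base s x2 = base s y2 \<or> (y2 \<notin> compl s \<and> (\<forall>R. Scan y2 R \<in> set (stack s) \<longrightarrow> x2 \<in> R))"
      using o(15)[unfolded i1_def, rule_format, of x2 y2] h y2 by blast
    then show "((base s)(f := f)) x2 = ((base s)(f := f)) y2 \<or>
         (y2 \<notin> compl s \<and> (\<forall>R. Scan y2 R \<in> set [Call f] \<longrightarrow> x2 \<in> R))"
      using bsame[OF x2] bsame[OF y2] by auto
  qed
  moreover have "iB E M ?s" unfolding iB_def bs using noadj by auto
  moreover have "iC E M ?s"
    unfolding iC_def bs bc
  proof (intro allI impI)
    fix u x2 fr assume h: "u \<in> od s" "matched M u" "x2 \<in> compl s" "(x2, u) \<in> E - M"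
      "fr \<in> set [Call f]" "(mate M u, ((base s)(f := f)) (fv fr)) \<in> (bchild M s)\<^sup>+"
    then have "(mate M u, f) \<in> (bchild M s)\<^sup>+" by simp
    then have "f \<in> ev s" using bchild_trancl_ran[OF o(2) o(3)] by blast
    then show "(((base s)(f := f)) x2, ((base s)(f := f)) (fv fr)) \<in> (bchild M s)\<^sup>*" using fev by simp
  qed
  moreover have "iD E M ?s" unfolding iD_def bs by (auto simp: Cons_eq_append_conv)
  moreover have "iE E M ?s" unfolding iE_def bs by (auto simp: Cons_eq_append_conv)
  ultimately show ?thesis unfolding invar_def by blast
qed


section \<open>Grow step\<close>

lemma fresh_trancl:
  assumes "c \<notin> Range r" "c \<noteq> d" "(a,b) \<in> (insert (c,d) r)\<^sup>+"
  shows "b \<noteq> c \<and> (a \<noteq> c \<longrightarrow> (a,b) \<in> r\<^sup>+)"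
  using assms(3)
proof (induction rule: trancl_induct)
  case (base y)
  then show ?case using assms(1,2) by auto
next
  case (step y z)
  then have "(y,z) \<in> r" using assms(2) by auto
  then show ?case using step assms(1) by auto
qed

lemma grow_pres:
  assumes G: "graph V E" and Mt: "matching E M" and I: "invar E M s"
    and st: "stack s = Scan x R # rest" and yR: "y \<in> R" and yS: "\<not> inS s y" and nfr: "\<not> free V M y"
  shows "invar E M (s\<lparr> od := insert y (od s), opar := (opar s)(y := x),
                         ev := insert (mate M y) (ev s),
                         base := (base s)(mate M y := mate M y),
                         stack := Call (mate M y) # Scan x (R - {y}) # rest \<rparr>)"
proof -
  define y' where "y' = mate M y"
  let ?s = "s\<lparr> od := insert y (od s), opar := (opar s)(y := x),
                         ev := insert y' (ev s),
                         base := (base s)(y' := y'),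
                         stack := Call y' # Scan x (R - {y}) # rest \<rparr>"
  note o = invarD[OF I]
  have exy: "(x,y) \<in> E - M" using o(9) st yR unfolding iR_def by simp
  have yV: "y \<in> V" using exy G unfolding graph_def by auto
  have my: "matched M y" using nfr yV unfolding free_def by simp
  have yy': "(y, y') \<in> M" "(y', y) \<in> M" using matched_mate[OF Mt my] mate_sym[OF Mt my] unfolding y'_def by auto
  have my': "matched M y'" "mate M y' = y" using mate_mate[OF Mt my] unfolding y'_def by auto
  have y'S: "\<not> inS s y'" using o(5) my' yS unfolding iClose_def by metis
  have yne: "y \<noteq> y'" using mate_neq[OF G Mt my] unfolding y'_def by simp
  have yev: "y \<notin> ev s" "y \<notin> od s" "y' \<notin> ev s" "y' \<notin> od s" using yS y'S unfolding inS_def by auto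
  have xev: "x \<in> ev s" using o(8) st unfolding iFrames_def by simp
  have xne: "x \<noteq> y'" "x \<noteq> y" using xev yev by auto
  have obase: "base s z \<in> ev s" if "z \<in> ev s" for z using o(2) that unfolding iBase_def by auto
  have oopar: "opar s u \<in> ev s" if "u \<in> od s" for u using o(3) that unfolding iOpar_def by auto
  have bsame: "((base s)(y' := y')) z = base s z" if "z \<in> ev s" for z using that yev by auto
  have bxne: "base s x \<noteq> y'" using obase[OF xev] yev by auto
  have mBy: "mate M B \<noteq> y" if "B \<in> ev s" "matched M B" for B
  proof
    assume "mate M B = y"
    then have "B = y'" using mate_mate[OF Mt that(2)] unfolding y'_def by metis
    then show False using that yev by simp
  qed
  have bc: "bchild M ?s = insert (y', base s x) (bchild M s)"
  proof -
    have "(B, p) \<in> bchild M ?s \<longleftrightarrow> (B, p) \<in> insert (y', base s x) (bchild M s)" for B p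
    proof
      assume "(B, p) \<in> bchild M ?s"
      then have h: "B \<in> insert y' (ev s)" "((base s)(y' := y')) B = B" "matched M B"
        "mate M B \<in> insert y (od s)"
        "p = ((base s)(y' := y')) (((opar s)(y := x)) (mate M B))"
        unfolding bchild_iff by simp_all
      show "(B, p) \<in> insert (y', base s x) (bchild M s)"
      proof (cases "B = y'")
        case True
        then show ?thesis using h my' bsame[OF xev] by simp
      next
        case False
        then have B: "B \<in> ev s" using h by simp
        then have "mate M B \<in> od s" using h mBy by auto
        then have "(B, p) \<in> bchild M s" using h B mBy[OF B] bsame[OF B] bsame[OF oopar] unfolding bchild_iff by simp
        then show ?thesis by simp
      qed
    next
      assume "(B, p) \<in> insert (y', base s x) (bchild M s)"
      then show "(B, p) \<in> bchild M ?s"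
      proof
        assume "(B, p) = (y', base s x)"
        then show ?thesis using my' bsame[OF xev] unfolding bchild_iff by simp
      next
        assume "(B, p) \<in> bchild M s"
        then have h: "B \<in> ev s" "base s B = B" "matched M B" "mate M B \<in> od s"
          "p = base s (opar s (mate M B))"
          unfolding bchild_iff by simp_all
        then show ?thesis using mBy[OF h(1,3)] bsame[OF h(1)] bsame[OF oopar[OF h(4)]]
          unfolding bchild_iff by simp
      qed
    qed
    then show ?thesis by auto
  qed
  have y'R: "y' \<notin> Range (bchild M s)" using bchild_ran[OF o(2) o(3)] yev by blast
  have fr: "b \<noteq> y' \<and> (a \<noteq> y' \<longrightarrow> (a,b) \<in> (bchild M s)\<^sup>+)" if "(a,b) \<in> (bchild M ?s)\<^sup>+" for a b
    using fresh_trancl[OF y'R bxne[symmetric]] that unfolding bc by blast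
  have rmono: "(bchild M s)\<^sup>* \<subseteq> (bchild M ?s)\<^sup>*" unfolding bc by (rule rtrancl_mono) auto
  have bs: "ev ?s = insert y' (ev s)" "od ?s = insert y (od s)" "stack ?s = Call y' # Scan x (R - {y}) # rest"
    "compl ?s = compl s" "seen ?s = seen s" "opar ?s = (opar s)(y := x)"
    "cp ?s = cp s" "base ?s = (base s)(y' := y')"
    by simp_all
  have inS': "inS ?s z \<longleftrightarrow> inS s z \<or> z = y \<or> z = y'" for z unfolding inS_def by auto
  have on': "on_cp ?s = on_cp s" by (simp add: on_cp_def[abs_def])
  have noadj: "(x2, y) \<notin> E - M" "(x2, y') \<notin> E - M" if "x2 \<in> compl s" for x2
    using o(13) that yS y'S unfolding i0_def by blast+
  have complev: "x2 \<in> ev s" if "x2 \<in> compl s" for x2 using o(7) that unfolding iCompl_def by auto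
  have frev: "fv f \<in> ev s" if "f \<in> set (stack s)" for f using o(8) that unfolding iFrames_def by auto
  have "iDisj ?s" using o(1) yev yne unfolding iDisj_def bs by auto
  moreover have "iBase ?s"
    unfolding iBase_def bs
  proof
    fix z assume "z \<in> insert y' (ev s)"
    then show "((base s)(y' := y')) z \<in> insert y' (ev s) \<and> ((base s)(y' := y')) (((base s)(y' := y')) z) = ((base s)(y' := y')) z"
    proof
      assume "z = y'" then show ?thesis by simp
    next
      assume z: "z \<in> ev s"
      then show ?thesis using o(2) bsame[OF z] bsame[OF obase[OF z]] unfolding iBase_def by auto
    qed
  qed
  moreover have "iOpar ?s" using o(3) xev unfolding iOpar_def bs by auto
  moreover have "iMateOd M ?s"
    unfolding iMateOd_def bs
  proof (intro ballI impI)
    fix u assume u: "u \<in> insert y (od s)" "matched M u"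
    show "mate M u \<in> insert y' (ev s) \<and> ((base s)(y' := y')) (mate M u) = mate M u"
    proof (cases "u = y")
      case True then show ?thesis unfolding y'_def by simp
    next
      case False
      then have "mate M u \<in> ev s \<and> base s (mate M u) = mate M u" using o(4) u unfolding iMateOd_def by auto
      then show ?thesis using bsame by auto
    qed
  qed
  moreover have "iClose M ?s"
    unfolding iClose_def inS'
  proof (intro allI impI)
    fix z assume h: "(inS s z \<or> z = y \<or> z = y') \<and> matched M z"
    show "inS s (mate M z) \<or> mate M z = y \<or> mate M z = y'"
    proof (cases "inS s z")
      case True then show ?thesis using o(5) h unfolding iClose_def by auto
    next
      case False then show ?thesis using h my' unfolding y'_def by auto
    qed
  qed
  moreover have "iMateEv M ?s"
    unfolding iMateEv_def bs
  proof (intro ballI impI)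
    fix z assume z: "z \<in> insert y' (ev s)" "matched M z \<and> mate M z \<in> insert y' (ev s)"
    have zne: "z \<noteq> y'" using z my' yne yev by auto
    then have zev: "z \<in> ev s" using z by simp
    then have "mate M z \<noteq> y'"
      using mate_mate[OF Mt] z my' yev unfolding y'_def by metis
    then have "mate M z \<in> ev s" using z by simp
    then show "((base s)(y' := y')) z = ((base s)(y' := y')) (mate M z)"
      using o(6) z zev bsame unfolding iMateEv_def by auto
  qed
  moreover have "iCompl ?s" using o(7) unfolding iCompl_def bs by auto
  moreover have "iFrames ?s" using o(8) xev st unfolding iFrames_def bs by auto
  moreover have "iR E M ?s" using o(9) st unfolding iR_def bs by auto
  moreover have "iFree M ?s" using o(10) my my' unfolding iFree_def inS' bs on' by auto
  moreover have "iAcyc M ?s"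
    unfolding iAcyc_def
  proof (intro allI notI)
    fix a assume "(a,a) \<in> (bchild M ?s)\<^sup>+"
    then have "a \<noteq> y'" "(a,a) \<in> (bchild M s)\<^sup>+" using fr by blast+
    then show False using o(11) unfolding iAcyc_def by blast
  qed
  moreover have "iChain M ?s"
  proof -
    have old: "sorted_wrt (\<lambda>a b. (base s a, base s b) \<in> (bchild M s)\<^sup>*) (x # map fv rest)"
      using o(12) st unfolding iChain_def by simp
    have sub: "set (x # map fv rest) \<subseteq> ev s" using frev st xev by auto
    have new1: "sorted_wrt (\<lambda>a b. (base ?s a, base ?s b) \<in> (bchild M ?s)\<^sup>*) (x # map fv rest)"
    proof (rule sorted_wrt_mono_rel[OF _ old])
      fix a b assume "a \<in> set (x # map fv rest)" "b \<in> set (x # map fv rest)"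
        "(base s a, base s b) \<in> (bchild M s)\<^sup>*"
      then have ab: "a \<in> ev s" "b \<in> ev s" "(base s a, base s b) \<in> (bchild M s)\<^sup>*" using sub by auto
      then have e: "base ?s a = base s a" "base ?s b = base s b" using bsame by simp_all
      show "(base ?s a, base ?s b) \<in> (bchild M ?s)\<^sup>*" unfolding e using rmono ab(3) by blast
    qed
    have new2: "(base ?s y', base ?s w) \<in> (bchild M ?s)\<^sup>*" if "w \<in> set (x # map fv rest)" for w
    proof -
      have "(base s x, base s w) \<in> (bchild M s)\<^sup>*" using old that by auto
      moreover have "w \<in> ev s" using sub that by blast
      then have "base ?s w = base s w" unfolding bs by (rule bsame)
      ultimately have "(base s x, base ?s w) \<in> (bchild M ?s)\<^sup>*" using rmono by auto
      moreover have "(y', base s x) \<in> bchild M ?s" unfolding bc by simp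
      ultimately show ?thesis by simp
    qed
    show ?thesis unfolding iChain_def bs using new1 new2 by simp
  qed
  moreover have "i0 E M ?s" using o(13) unfolding i0_def inS' bs by auto
  moreover have "i0' E M ?s"
    unfolding i0'_def bs inS'
  proof (intro allI impI)
    fix x2 R2 z assume h: "Scan x2 R2 \<in> set (Call y' # Scan x (R - {y}) # rest)" "(x2, z) \<in> E - M" "z \<notin> R2"
    show "inS s z \<or> z = y \<or> z = y'"
    proof (cases "Scan x2 R2 = Scan x (R - {y})")
      case True
      then show ?thesis using o(14)[unfolded i0'_def, rule_format, of x R z] h st by auto
    next
      case False
      then have "Scan x2 R2 \<in> set (stack s)" using h st by auto
      then show ?thesis using o(14)[unfolded i0'_def, rule_format, of x2 R2 z] h by auto
    qed
  qed
  moreover have "i1 E M ?s"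
    unfolding i1_def bs
  proof (intro allI impI)
    fix x2 y2 assume h: "x2 \<in> compl s" "(x2, y2) \<in> E - M" "y2 \<in> insert y' (ev s)"
    then have "y2 \<noteq> y'" using noadj by blast
    then have y2: "y2 \<in> ev s" using h by simp
    have x2: "x2 \<in> ev s" "x2 \<noteq> y" using complev h yev by auto
    have "base s x2 = base s y2 \<or> (y2 \<notin> compl s \<and> (\<forall>R. Scan y2 R \<in> set (stack s) \<longrightarrow> x2 \<in> R))"
      using o(15)[unfolded i1_def, rule_format, of x2 y2] h y2 by blast
    then show "((base s)(y' := y')) x2 = ((base s)(y' := y')) y2 \<or>
         (y2 \<notin> compl s \<and> (\<forall>R'. Scan y2 R' \<in> set (Call y' # Scan x (R - {y}) # rest) \<longrightarrow> x2 \<in> R'))"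
      using bsame[OF x2(1)] bsame[OF y2] st x2(2) by auto
  qed
  moreover have "iB E M ?s"
    unfolding iB_def bs
  proof (intro allI impI)
    fix x2 y2 assume h: "x2 \<in> compl s" "(x2, y2) \<in> E - M"
      "Call y2 \<in> set (Call y' # Scan x (R - {y}) # rest) \<or> (\<exists>R'. Scan y2 R' \<in> set (Call y' # Scan x (R - {y}) # rest) \<and> x2 \<in> R')"
    then have "y2 \<noteq> y'" using noadj by blast
    then have "Call y2 \<in> set (stack s) \<or> (\<exists>R. Scan y2 R \<in> set (stack s) \<and> x2 \<in> R)"
      using h st by auto
    moreover have "y2 \<in> ev s" using calculation frev by force
    ultimately have "(base s x2, base s y2) \<in> (bchild M s)\<^sup>*"
      using o(16)[unfolded iB_def, rule_format, of x2 y2] h by blast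
    then show "(((base s)(y' := y')) x2, ((base s)(y' := y')) y2) \<in> (bchild M ?s)\<^sup>*"
      using bsame complev h \<open>y2 \<in> ev s\<close> rmono by auto
  qed
  moreover have "iC E M ?s"
    unfolding iC_def bs
  proof (intro allI impI)
    fix u x2 f assume h: "u \<in> insert y (od s)" "matched M u" "x2 \<in> compl s" "(x2, u) \<in> E - M"
      "f \<in> set (Call y' # Scan x (R - {y}) # rest)"
      "(mate M u, ((base s)(y' := y')) (fv f)) \<in> (bchild M ?s)\<^sup>+"
    have "u \<noteq> y" using noadj h by blast
    then have u: "u \<in> od s" using h by simp
    then have mu: "mate M u \<in> ev s" using o(4) h unfolding iMateOd_def by auto
    have "f \<noteq> Call y'" using fr[OF h(6)] by auto
    then have "\<exists>f0\<in>set (stack s). fv f0 = fv f"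
    proof (cases "f = Scan x (R - {y})")
      case True then show ?thesis using st by (intro bexI[of _ "Scan x R"]) simp_all
    next
      case False then show ?thesis using h(5) st \<open>f \<noteq> Call y'\<close> by auto
    qed
    then obtain f0 where f0: "f0 \<in> set (stack s)" "fv f0 = fv f" by blast
    have fe: "fv f \<in> ev s" using frev f0 by metis
    have "(mate M u, base s (fv f0)) \<in> (bchild M s)\<^sup>+" using fr[OF h(6)] mu yev bsame[OF fe] f0 by auto
    then have "(base s x2, base s (fv f0)) \<in> (bchild M s)\<^sup>*"
      using o(17)[unfolded iC_def, rule_format, of u x2 f0] h u f0 by blast
    then show "(((base s)(y' := y')) x2, ((base s)(y' := y')) (fv f)) \<in> (bchild M ?s)\<^sup>*"
      using bsame complev h fe f0 rmono by auto
  qed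
  moreover have "iD E M ?s"
    unfolding iD_def bs
  proof (intro allI impI)
    fix pre y2 R2 post x2 assume h: "Call y' # Scan x (R - {y}) # rest = pre @ Scan y2 R2 # post"
      "x2 \<in> insert y' (ev s)" "(y2, x2) \<in> E - M" "x2 \<notin> R2"
    from split_stack[of "[y']" x "R - {y}" rest pre y2 R2 post] h(1)
    consider "pre = [Call y'] \<and> y2 = x \<and> R2 = R - {y} \<and> post = rest"
      | pre'' where "pre = Call y' # Scan x (R - {y}) # pre''" "rest = pre'' @ Scan y2 R2 # post" by auto
    then show "((base s)(y' := y')) x2 = ((base s)(y' := y')) y2 \<or> x2 \<notin> fv ` set pre"
    proof cases
      case 1
      have "x2 \<noteq> y'"
      proof
        assume "x2 = y'"
        then have "inS s y'" using o(14)[unfolded i0'_def, rule_format, of x R y'] h 1 st yne by auto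
        then show False using y'S by simp
      qed
      then show ?thesis using 1 by simp
    next
      case 2
      have st2: "stack s = (Scan x R # pre'') @ Scan y2 R2 # post" using st 2 by simp
      then have y2e: "y2 \<in> ev s" using frev by (metis in_set_conv_decomp fv.simps(2))
      have "x2 \<noteq> y'"
      proof
        assume "x2 = y'"
        then have "inS s y'" using o(14)[unfolded i0'_def, rule_format, of y2 R2 y'] h st2 by auto
        then show False using y'S by simp
      qed
      then have x2: "x2 \<in> ev s" using h by simp
      have "base s x2 = base s y2 \<or> x2 \<notin> fv ` set (Scan x R # pre'')"
        using o(18)[unfolded iD_def, rule_format, of "Scan x R # pre''" y2 R2 post x2] st2 h x2 by blast
      then show ?thesis using 2 bsame[OF x2] bsame[OF y2e] \<open>x2 \<noteq> y'\<close> by auto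
    qed
  qed
  moreover have "iE E M ?s"
    unfolding iE_def bs
  proof (intro allI impI)
    fix pre y2 R2 post x2 f assume h: "Call y' # Scan x (R - {y}) # rest = pre @ Scan y2 R2 # post"
      "x2 \<in> insert y (od s)" "matched M x2" "(y2, x2) \<in> E - M" "x2 \<notin> R2" "f \<in> set pre"
      "(mate M x2, ((base s)(y' := y')) (fv f)) \<in> (bchild M ?s)\<^sup>+"
    have fnc: "f \<noteq> Call y'" using fr[OF h(7)] by auto
    from split_stack[of "[y']" x "R - {y}" rest pre y2 R2 post] h(1)
    consider "pre = [Call y'] \<and> y2 = x \<and> R2 = R - {y} \<and> post = rest"
      | pre'' where "pre = Call y' # Scan x (R - {y}) # pre''" "rest = pre'' @ Scan y2 R2 # post" by auto
    then show "((base s)(y' := y')) (fv f) = ((base s)(y' := y')) y2"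
    proof cases
      case 1
      then show ?thesis using fnc h by simp
    next
      case 2
      have st2: "stack s = (Scan x R # pre'') @ Scan y2 R2 # post" using st 2 by simp
      then have y2e: "y2 \<in> ev s" using frev by (metis in_set_conv_decomp fv.simps(2))
      have "x2 \<noteq> y"
      proof
        assume "x2 = y"
        then have "inS s y" using o(14)[unfolded i0'_def, rule_format, of y2 R2 y] h st2 by auto
        then show False using yS by simp
      qed
      then have x2: "x2 \<in> od s" using h by simp
      then have mu: "mate M x2 \<in> ev s" using o(4) h unfolding iMateOd_def by auto
      have "\<exists>f0\<in>set (Scan x R # pre''). fv f0 = fv f"
      proof (cases "f = Scan x (R - {y})")
        case True then show ?thesis by (intro bexI[of _ "Scan x R"]) simp_all
      next
        case False then show ?thesis using 2 h(6) fnc by auto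
      qed
      then obtain f0 where f0: "f0 \<in> set (Scan x R # pre'')" "fv f0 = fv f" by blast
      have fe: "fv f \<in> ev s" using frev f0 st2 by (metis Un_iff set_append list.set_intros(1) set_ConsD)
      have "(mate M x2, base s (fv f0)) \<in> (bchild M s)\<^sup>+" using fr[OF h(7)] mu yev bsame[OF fe] f0 by auto
      then have "base s (fv f0) = base s y2"
        using o(19)[unfolded iE_def, rule_format, of "Scan x R # pre''" y2 R2 post x2 f0] st2 h x2 f0 by blast
      then show ?thesis using bsame[OF fe] bsame[OF y2e] f0 by simp
    qed
  qed
  ultimately show ?thesis unfolding invar_def y'_def by blast
qed


section \<open>Blossom step\<close>

lemma blossom_pres:
  assumes G: "graph V E" and Mt: "matching E M" and I: "invar E M s"
    and st: "stack s = Scan x R # rest" and yR: "y \<in> R" and yev: "y \<in> ev s"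
    and desc: "(base s y, base s x) \<in> (bchild M s)\<^sup>+"
    and Pdef: "P = {B. (base s y, B) \<in> (bchild M s)\<^sup>* \<and> (B, base s x) \<in> (bchild M s)\<^sup>+}"
    and usP: "set us = mate M ` P"
  shows "invar E M (s\<lparr> ev := ev s \<union> set us, od := od s - set us,
                         base := (\<lambda>z. if (z \<in> ev s \<and> (base s z \<in> P \<or> base s z = base s x))
                                          \<or> z \<in> set us then base s x else base s z),
                         stack := map Call us @ Scan x (R - {y}) # rest \<rparr>)"
proof -
  define T where "T = base s x"
  define g where "g = (\<lambda>B. if B \<in> P then T else B)"
  define bf where "bf = (\<lambda>z. if (z \<in> ev s \<and> (base s z \<in> P \<or> base s z = base s x))
                                          \<or> z \<in> set us then base s x else base s z)"
  let ?s = "s\<lparr> ev := ev s \<union> set us, od := od s - set us,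
                         base := bf,
                         stack := map Call us @ Scan x (R - {y}) # rest \<rparr>"
  note o = invarD[OF I]
  have xev: "x \<in> ev s" using o(8) st unfolding iFrames_def by simp
  have obase: "base s z \<in> ev s" "base s (base s z) = base s z" if "z \<in> ev s" for z
    using o(2) that unfolding iBase_def by auto
  have oopar: "opar s u \<in> ev s" if "u \<in> od s" for u using o(3) that unfolding iOpar_def by auto
  have Tev: "T \<in> ev s" "base s T = T" using obase[OF xev] unfolding T_def by auto
  have acyc: "(a,a) \<notin> (bchild M s)\<^sup>+" for a using o(11) unfolding iAcyc_def by blast
  have disj: "ev s \<inter> od s = {}" using o(1) unfolding iDisj_def .
  have PT: "(B, T) \<in> (bchild M s)\<^sup>+" if "B \<in> P" for B using that unfolding Pdef T_def by simp
  have Pprops: "B \<in> ev s \<and> base s B = B \<and> matched M B \<and> mate M B \<in> od s" if BP: "B \<in> P" for B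
  proof -
    obtain c where "(B, c) \<in> bchild M s" using PT[OF BP] by (meson tranclD)
    then show ?thesis unfolding bchild_iff by simp
  qed
  have TnP: "T \<notin> P" using PT acyc by blast
  have usod: "u \<in> od s" "u \<notin> ev s" if "u \<in> set us" for u
    using that usP Pprops disj by auto
  have usm: "matched M u \<and> mate M u \<in> P \<and> (mate M u, T) \<in> (bchild M s)\<^sup>+" if uu: "u \<in> set us" for u
  proof -
    obtain B where B: "B \<in> P" "u = mate M B" using uu usP by auto
    then have "matched M B" using Pprops by blast
    then have "mate M u = B" "matched M u" using mate_mate[OF Mt] B by auto
    then show ?thesis using B PT by auto
  qed
  have mateP: "mate M u \<notin> P" if "matched M u" "u \<notin> set us" for u
  proof
    assume "mate M u \<in> P"
    then have "mate M (mate M u) \<in> set us" using usP by auto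
    then show False using mate_mate[OF Mt that(1)] that(2) by simp
  qed
  have bs: "ev ?s = ev s \<union> set us" "od ?s = od s - set us"
    "stack ?s = map Call us @ Scan x (R - {y}) # rest"
    "compl ?s = compl s" "seen ?s = seen s" "opar ?s = opar s" "cp ?s = cp s"
    by simp_all
  have b'ev: "base ?s z = g (base s z)" if "z \<in> ev s" for z
    using that usod TnP unfolding g_def T_def bf_def by auto
  have b'us: "base ?s u = T" if "u \<in> set us" for u using that unfolding T_def bf_def by simp
  have gT: "g T = T" unfolding g_def by simp
  have gnP: "g B = B" if "B \<notin> P" for B using that unfolding g_def by simp
  have Pparent: "p \<in> P \<or> p = T" if "A \<in> P" "(A, p) \<in> bchild M s" for A p
  proof -
    have "(A, T) \<in> (bchild M s)\<^sup>+" using PT that(1) .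
    then obtain c where c: "(A, c) \<in> bchild M s" "c = T \<or> (c, T) \<in> (bchild M s)\<^sup>+"
      by (metis converse_tranclE)
    then have "c = p" using bchild_fun that(2) by metis
    moreover have "(base s y, A) \<in> (bchild M s)\<^sup>*" using that(1) unfolding Pdef by simp
    then have "(base s y, p) \<in> (bchild M s)\<^sup>*" using that(2) by simp
    ultimately show ?thesis using c unfolding Pdef T_def by auto
  qed
  have inS': "inS ?s = inS s" unfolding inS_def[abs_def] using usod by auto
  have on': "on_cp ?s = on_cp s" by (simp add: on_cp_def[abs_def])
  have sub: "bchild M ?s \<subseteq> (bchild M s)\<^sup>+"
  proof
    fix e assume "e \<in> bchild M ?s"
    then obtain B q where e: "e = (B, q)" "(B, q) \<in> bchild M ?s" by (cases e) auto
    then have h: "B \<in> ev s \<union> set us" "base ?s B = B" "matched M B" "mate M B \<in> od s - set us"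
      "q = base ?s (opar s (mate M B))"
      unfolding bchild_iff by simp_all
    have "B \<notin> set us"
    proof
      assume "B \<in> set us"
      then have "mate M B \<in> P" using usm by blast
      then have "mate M B \<in> ev s" using Pprops by blast
      then show False using h(4) disj by auto
    qed
    then have Bev: "B \<in> ev s" using h by simp
    have "g (base s B) = B" using h(2) b'ev[OF Bev] by simp
    then have BB: "base s B = B \<and> B \<notin> P"
      using TnP Tev(2) obase(2)[OF Bev] unfolding g_def by (auto split: if_splits)
    have mo: "mate M B \<in> od s" using h by simp
    define p where "p = base s (opar s (mate M B))"
    have Bp: "(B, p) \<in> bchild M s" using Bev BB h(3) mo unfolding bchild_iff p_def by simp
    have "q = g p" using h(5) b'ev[OF oopar[OF mo]] unfolding p_def by simp
    then have "(B, q) \<in> (bchild M s)\<^sup>+"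
      using Bp PT unfolding g_def by (auto split: if_splits intro: trancl_into_trancl2)
    then show "e \<in> (bchild M s)\<^sup>+" using e by simp
  qed
  have trefl: "(bchild M ?s)\<^sup>+ \<subseteq> (bchild M s)\<^sup>+"
  proof
    fix e assume "e \<in> (bchild M ?s)\<^sup>+"
    from trancl_mono[OF this sub] show "e \<in> (bchild M s)\<^sup>+" by simp
  qed
  have mono1: "(g A, g p) \<in> (bchild M ?s)\<^sup>*" if "(A, p) \<in> bchild M s" for A p
  proof (cases "A \<in> P")
    case True
    then have "g p = T" using Pparent[OF True that] gT unfolding g_def by auto
    then show ?thesis using True unfolding g_def by simp
  next
    case False
    have h: "A \<in> ev s" "base s A = A" "matched M A" "mate M A \<in> od s" "p = base s (opar s (mate M A))"
      using that unfolding bchild_iff by simp_all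
    have "mate M A \<notin> set us"
    proof
      assume "mate M A \<in> set us"
      then have "mate M (mate M A) \<in> P" using usm by blast
      then show False using mate_mate[OF Mt h(3)] False by simp
    qed
    moreover have "base ?s A = A" using b'ev[OF h(1)] h(2) gnP[OF False] by simp
    moreover have "base ?s (opar s (mate M A)) = g p" using b'ev[OF oopar[OF h(4)]] h(5) by simp
    ultimately have "(A, g p) \<in> bchild M ?s" using h unfolding bchild_iff by simp
    then show ?thesis using gnP[OF False] by simp
  qed
  have mono: "(g a, g c) \<in> (bchild M ?s)\<^sup>*" if "(a, c) \<in> (bchild M s)\<^sup>*" for a c
    using that
  proof (induction rule: rtrancl_induct)
    case base then show ?case by simp
  next
    case (step b c) then show ?case using mono1[OF step(2)] by simp
  qed
  have frev: "fv f \<in> ev s" if "f \<in> set (stack s)" for f using o(8) that unfolding iFrames_def by auto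
  have restT: "(T, base s (fv f)) \<in> (bchild M s)\<^sup>*" if "f \<in> set rest" for f
    using o(12) st that unfolding iChain_def T_def by simp
  have restnP: "base s (fv f) \<notin> P" if "f \<in> set rest" for f
  proof
    assume "base s (fv f) \<in> P"
    then have "(base s (fv f), T) \<in> (bchild M s)\<^sup>+" using PT by blast
    then have "(T, T) \<in> (bchild M s)\<^sup>+" using restT[OF that] by simp
    then show False using acyc by blast
  qed
  have restev: "fv f \<in> ev s" if "f \<in> set rest" for f using frev st that by simp
  have complev: "x2 \<in> ev s" if "x2 \<in> compl s" for x2 using o(7) that unfolding iCompl_def by auto
  have b'x: "base ?s x = T" using b'ev[OF xev] gT unfolding T_def by simp
  have yP: "base s y \<in> P" using desc unfolding Pdef by simp
  have b'y: "base ?s y = T" using b'ev[OF yev] yP unfolding g_def by simp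
  have frmap: "\<exists>f0\<in>set (Scan x R # L). base ?s (fv f) = base s (fv f0) \<and> base s (fv f0) \<notin> P"
    if fin: "f \<in> set (map Call us @ Scan x (R - {y}) # L)" and Lsub: "set L \<subseteq> set rest" for f L
  proof -
    consider "f \<in> set (map Call us)" | "f = Scan x (R - {y})" | "f \<in> set L" using fin by auto
    then show ?thesis
    proof cases
      case 1
      then obtain u where "u \<in> set us" "f = Call u" by auto
      then have "base ?s (fv f) = base s (fv (Scan x R))" using b'us unfolding T_def by simp
      then show ?thesis using TnP unfolding T_def by (intro bexI[of _ "Scan x R"]) simp_all
    next
      case 2
      then have "base ?s (fv f) = base s (fv (Scan x R))" using b'x unfolding T_def by simp
      then show ?thesis using TnP unfolding T_def by (intro bexI[of _ "Scan x R"]) simp_all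
    next
      case 3
      then have "f \<in> set rest" using Lsub by auto
      then have "base ?s (fv f) = base s (fv f) \<and> base s (fv f) \<notin> P"
        using b'ev[OF restev] restnP gnP by simp
      then show ?thesis using 3 by auto
    qed
  qed
  have "iDisj ?s" using disj unfolding iDisj_def bs by auto
  moreover have "iBase ?s"
    unfolding iBase_def
  proof
    fix z assume z: "z \<in> ev ?s"
    show "base ?s z \<in> ev ?s \<and> base ?s (base ?s z) = base ?s z"
    proof (cases "z \<in> set us")
      case True
      then show ?thesis using b'us Tev b'ev[OF Tev(1)] gT by simp
    next
      case False
      then have zev: "z \<in> ev s" using z by simp
      show ?thesis
      proof (cases "base s z \<in> P")
        case True
        then show ?thesis using b'ev[OF zev] Tev b'ev[OF Tev(1)] gT unfolding g_def by simp
      next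
        case False
        then show ?thesis using b'ev[OF zev] obase[OF zev] b'ev[OF obase(1)[OF zev]] unfolding g_def by simp
      qed
    qed
  qed
  moreover have "iOpar ?s" using o(3) unfolding iOpar_def bs by auto
  moreover have "iMateOd M ?s"
    unfolding iMateOd_def
  proof (intro ballI impI)
    fix u assume u: "u \<in> od ?s" "matched M u"
    then have uo: "u \<in> od s" "u \<notin> set us" by auto
    then have m: "mate M u \<in> ev s" "base s (mate M u) = mate M u" using o(4) u unfolding iMateOd_def by auto
    show "mate M u \<in> ev ?s \<and> base ?s (mate M u) = mate M u"
      using m b'ev[OF m(1)] gnP[OF mateP[OF u(2) uo(2)]] by simp
  qed
  moreover have "iClose M ?s" using o(5) unfolding iClose_def inS' .
  moreover have "iMateEv M ?s"
    unfolding iMateEv_def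
  proof (intro ballI impI)
    fix z assume z: "z \<in> ev ?s" "matched M z \<and> mate M z \<in> ev ?s"
    show "base ?s z = base ?s (mate M z)"
    proof (cases "z \<in> set us")
      case True
      then have "mate M z \<in> P" using usm by blast
      then show ?thesis using True b'us Pprops b'ev gT unfolding g_def by auto
    next
      case zn: False
      then have zev: "z \<in> ev s" using z by simp
      show ?thesis
      proof (cases "mate M z \<in> set us")
        case True
        then have "mate M (mate M z) \<in> P" using usm by blast
        then have "z \<in> P" using mate_mate[OF Mt] z by auto
        then show ?thesis using True b'us Pprops b'ev[OF zev] unfolding g_def by auto
      next
        case False
        then have "mate M z \<in> ev s" using z by simp
        then show ?thesis using o(6) zev z b'ev unfolding iMateEv_def by auto
      qed
    qed
  qed
  moreover have "iCompl ?s" using o(7) unfolding iCompl_def bs by auto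
  moreover have "iFrames ?s" using o(8) xev st unfolding iFrames_def bs by auto
  moreover have "iR E M ?s" using o(9) st unfolding iR_def bs by auto
  moreover have "iFree M ?s" using o(10) unfolding iFree_def inS' bs on' .
  moreover have "iAcyc M ?s" using acyc trefl unfolding iAcyc_def by blast
  moreover have "iChain M ?s"
  proof -
    have old: "sorted_wrt (\<lambda>a b. (base s a, base s b) \<in> (bchild M s)\<^sup>*) (x # map fv rest)"
      using o(12) st unfolding iChain_def by simp
    have sb: "set (x # map fv rest) \<subseteq> ev s" using restev xev by auto
    have new1: "sorted_wrt (\<lambda>a b. (base ?s a, base ?s b) \<in> (bchild M ?s)\<^sup>*) (x # map fv rest)"
    proof (rule sorted_wrt_mono_rel[OF _ old])
      fix a b assume "a \<in> set (x # map fv rest)" "b \<in> set (x # map fv rest)"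
        "(base s a, base s b) \<in> (bchild M s)\<^sup>*"
      then have ab: "a \<in> ev s" "b \<in> ev s" "(base s a, base s b) \<in> (bchild M s)\<^sup>*" using sb by auto
      have e: "base ?s a = g (base s a)" "base ?s b = g (base s b)" using b'ev ab by simp_all
      show "(base ?s a, base ?s b) \<in> (bchild M ?s)\<^sup>*" unfolding e by (rule mono[OF ab(3)])
    qed
    have new0: "sorted_wrt (\<lambda>a b. (base ?s a, base ?s b) \<in> (bchild M ?s)\<^sup>*) us"
      using b'us by (simp add: sorted_wrt_iff_nth_less)
    have new2: "(base ?s a, base ?s b) \<in> (bchild M ?s)\<^sup>*" if "a \<in> set us" "b \<in> set (x # map fv rest)" for a b
    proof -
      have "(T, base s b) \<in> (bchild M s)\<^sup>*" using that(2) restT unfolding T_def by auto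
      then have "(g T, g (base s b)) \<in> (bchild M ?s)\<^sup>*" by (rule mono)
      then show ?thesis using b'us[OF that(1)] b'ev sb that(2) gT by auto
    qed
    have mfv: "map fv (stack ?s) = us @ (x # map fv rest)" unfolding bs by (induction us) simp_all
    have "sorted_wrt (\<lambda>a b. (base ?s a, base ?s b) \<in> (bchild M ?s)\<^sup>*) (us @ (x # map fv rest))"
      unfolding sorted_wrt_append using new0 new1 new2 by blast
    then show ?thesis unfolding iChain_def mfv .
  qed
  moreover have "i0 E M ?s" using o(13) unfolding i0_def inS' bs .
  moreover have "i0' E M ?s"
    unfolding i0'_def bs inS'
  proof (intro allI impI)
    fix x2 R2 z assume h: "Scan x2 R2 \<in> set (map Call us @ Scan x (R - {y}) # rest)" "(x2, z) \<in> E - M" "z \<notin> R2"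
    show "inS s z"
    proof (cases "Scan x2 R2 = Scan x (R - {y})")
      case True
      then show ?thesis using o(14)[unfolded i0'_def, rule_format, of x R z] h st yev
        unfolding inS_def by auto
    next
      case False
      then have "Scan x2 R2 \<in> set (stack s)" using h st by auto
      then show ?thesis using o(14)[unfolded i0'_def, rule_format, of x2 R2 z] h by auto
    qed
  qed
  moreover have "i1 E M ?s"
    unfolding i1_def bs
  proof (intro allI impI)
    fix x2 y2 assume h: "x2 \<in> compl s" "(x2, y2) \<in> E - M" "y2 \<in> ev s \<union> set us"
    have x2: "x2 \<in> ev s" using complev h by blast
    show "base ?s x2 = base ?s y2 \<or>
         (y2 \<notin> compl s \<and> (\<forall>R'. Scan y2 R' \<in> set (map Call us @ Scan x (R - {y}) # rest) \<longrightarrow> x2 \<in> R'))"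
    proof (cases "y2 \<in> set us")
      case True
      then have "y2 \<notin> ev s" using usod by blast
      then have "y2 \<notin> compl s" "y2 \<noteq> x" "\<forall>R'. Scan y2 R' \<notin> set rest" using complev xev restev by force+
      then show ?thesis by auto
    next
      case False
      then have y2: "y2 \<in> ev s" using h by simp
      show ?thesis
      proof (cases "x2 = y \<and> y2 = x")
        case True
        then show ?thesis using b'x b'y by simp
      next
        case nxy: False
        have "base s x2 = base s y2 \<or> (y2 \<notin> compl s \<and> (\<forall>R. Scan y2 R \<in> set (stack s) \<longrightarrow> x2 \<in> R))"
          using o(15)[unfolded i1_def, rule_format, of x2 y2] h y2 by blast
        then show ?thesis
        proof
          assume "base s x2 = base s y2"
          then show ?thesis using b'ev[OF x2] b'ev[OF y2] by simp
        next
          assume hh: "y2 \<notin> compl s \<and> (\<forall>R. Scan y2 R \<in> set (stack s) \<longrightarrow> x2 \<in> R)"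
          have "x2 \<in> R'" if "Scan y2 R' \<in> set (map Call us @ Scan x (R - {y}) # rest)" for R'
          proof (cases "Scan y2 R' = Scan x (R - {y})")
            case True
            then show ?thesis using hh st nxy by auto
          next
            case False
            then show ?thesis using that hh st by auto
          qed
          then show ?thesis using hh by blast
        qed
      qed
    qed
  qed
  moreover have "iB E M ?s"
    unfolding iB_def bs
  proof (intro allI impI)
    fix x2 y2 assume h: "x2 \<in> compl s" "(x2, y2) \<in> E - M"
      "Call y2 \<in> set (map Call us @ Scan x (R - {y}) # rest) \<or> (\<exists>R'. Scan y2 R' \<in> set (map Call us @ Scan x (R - {y}) # rest) \<and> x2 \<in> R')"
    have x2: "x2 \<in> ev s" using complev h by blast
    show "(base ?s x2, base ?s y2) \<in> (bchild M ?s)\<^sup>*"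
    proof (cases "y2 \<in> set us")
      case True
      have "Scan x R \<in> set (stack s)" using st by simp
      moreover have "y2 \<in> od s" using usod True by blast
      moreover have "(mate M y2, base s (fv (Scan x R))) \<in> (bchild M s)\<^sup>+" using usm True unfolding T_def by simp
      ultimately have "(base s x2, base s (fv (Scan x R))) \<in> (bchild M s)\<^sup>*"
        using o(17)[unfolded iC_def, rule_format, of y2 x2 "Scan x R"] h usm True by blast
      then have "(g (base s x2), g T) \<in> (bchild M ?s)\<^sup>*" using mono unfolding T_def by simp
      then show ?thesis using b'ev[OF x2] b'us[OF True] gT by simp
    next
      case False
      then have "Call y2 \<in> set (stack s) \<or> (\<exists>R. Scan y2 R \<in> set (stack s) \<and> x2 \<in> R)"
        using h st by auto
      moreover have "y2 \<in> ev s" using calculation frev by force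
      ultimately have "(base s x2, base s y2) \<in> (bchild M s)\<^sup>*"
        using o(16)[unfolded iB_def, rule_format, of x2 y2] h by blast
      then show ?thesis using mono b'ev[OF x2] b'ev[OF \<open>y2 \<in> ev s\<close>] by simp
    qed
  qed
  moreover have "iC E M ?s"
    unfolding iC_def bs
  proof (intro allI impI)
    fix u x2 f assume h: "u \<in> od s - set us" "matched M u" "x2 \<in> compl s" "(x2, u) \<in> E - M"
      "f \<in> set (map Call us @ Scan x (R - {y}) # rest)"
      "(mate M u, base ?s (fv f)) \<in> (bchild M ?s)\<^sup>+"
    have x2: "x2 \<in> ev s" using complev h by blast
    obtain f0 where f0: "f0 \<in> set (Scan x R # rest)" "base ?s (fv f) = base s (fv f0)" "base s (fv f0) \<notin> P"
      using frmap[OF h(5)] by blast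
    have "(mate M u, base s (fv f0)) \<in> (bchild M s)\<^sup>+" using h(6) trefl f0 by auto
    then have "(base s x2, base s (fv f0)) \<in> (bchild M s)\<^sup>*"
      using o(17)[unfolded iC_def, rule_format, of u x2 f0] h f0 st by auto
    then have "(g (base s x2), g (base s (fv f0))) \<in> (bchild M ?s)\<^sup>*" by (rule mono)
    then show "(base ?s x2, base ?s (fv f)) \<in> (bchild M ?s)\<^sup>*"
      using b'ev[OF x2] f0 gnP by simp
  qed
  moreover have "iD E M ?s"
    unfolding iD_def bs
  proof (intro allI impI)
    fix pre y2 R2 post x2 assume h: "map Call us @ Scan x (R - {y}) # rest = pre @ Scan y2 R2 # post"
      "x2 \<in> ev s \<union> set us" "(y2, x2) \<in> E - M" "x2 \<notin> R2"
    from split_stack[OF h(1)]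
    consider "pre = map Call us \<and> y2 = x \<and> R2 = R - {y} \<and> post = rest"
      | pre'' where "pre = map Call us @ Scan x (R - {y}) # pre''" "rest = pre'' @ Scan y2 R2 # post" by auto
    then show "base ?s x2 = base ?s y2 \<or> x2 \<notin> fv ` set pre"
    proof cases
      case 1
      show ?thesis
      proof (cases "x2 \<in> set us \<or> x2 = y")
        case True
        then show ?thesis using 1 b'us b'x b'y by auto
      next
        case False
        then have "x2 \<notin> fv ` set (map Call us)" by auto
        then show ?thesis using 1 by simp
      qed
    next
      case 2
      have st2: "stack s = (Scan x R # pre'') @ Scan y2 R2 # post" using st 2 by simp
      have y2e: "y2 \<in> ev s" using restev 2 by force
      show ?thesis
      proof (cases "x2 \<in> set us")
        case True
        have "x2 \<in> od s" using usod True by blast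
        moreover have "(mate M x2, base s (fv (Scan x R))) \<in> (bchild M s)\<^sup>+" using usm True unfolding T_def by simp
        moreover have "Scan x R \<in> set (Scan x R # pre'')" by simp
        ultimately have "base s (fv (Scan x R)) = base s y2"
          using o(19)[unfolded iE_def, rule_format, of "Scan x R # pre''" y2 R2 post x2 "Scan x R"] st2 h usm True
          by blast
        then have "base s y2 = T" unfolding T_def by simp
        then show ?thesis using b'us[OF True] b'ev[OF y2e] gT by simp
      next
        case False
        then have x2: "x2 \<in> ev s" using h by simp
        have "base s x2 = base s y2 \<or> x2 \<notin> fv ` set (Scan x R # pre'')"
          using o(18)[unfolded iD_def, rule_format, of "Scan x R # pre''" y2 R2 post x2] st2 h x2 by blast
        then show ?thesis using 2 b'ev[OF x2] b'ev[OF y2e] False by auto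
      qed
    qed
  qed
  moreover have "iE E M ?s"
    unfolding iE_def bs
  proof (intro allI impI)
    fix pre y2 R2 post x2 f assume h: "map Call us @ Scan x (R - {y}) # rest = pre @ Scan y2 R2 # post"
      "x2 \<in> od s - set us" "matched M x2" "(y2, x2) \<in> E - M" "x2 \<notin> R2" "f \<in> set pre"
      "(mate M x2, base ?s (fv f)) \<in> (bchild M ?s)\<^sup>+"
    from split_stack[OF h(1)]
    consider "pre = map Call us \<and> y2 = x \<and> R2 = R - {y} \<and> post = rest"
      | pre'' where "pre = map Call us @ Scan x (R - {y}) # pre''" "rest = pre'' @ Scan y2 R2 # post" by auto
    then show "base ?s (fv f) = base ?s y2"
    proof cases
      case 1
      then obtain u where "u \<in> set us" "f = Call u" using h(6) by auto
      then show ?thesis using 1 b'us b'x by simp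
    next
      case 2
      have st2: "stack s = (Scan x R # pre'') @ Scan y2 R2 # post" using st 2 by simp
      have y2e: "y2 \<in> ev s" using restev 2 by force
      have "set pre'' \<subseteq> set rest" using 2 by auto
      then obtain f0 where f0: "f0 \<in> set (Scan x R # pre'')" "base ?s (fv f) = base s (fv f0)" "base s (fv f0) \<notin> P"
        using frmap[of f pre''] h(6) 2 by blast
      have "(mate M x2, base s (fv f0)) \<in> (bchild M s)\<^sup>+" using h(7) trefl f0 by auto
      then have "base s (fv f0) = base s y2"
        using o(19)[unfolded iE_def, rule_format, of "Scan x R # pre''" y2 R2 post x2 f0] st2 h f0 by auto
      then show ?thesis using f0 b'ev[OF y2e] gnP by simp
    qed
  qed
  ultimately have "invar E M ?s" unfolding invar_def by blast
  then show ?thesis unfolding bf_def .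
qed


lemma step_invar:
  assumes G: "graph V E" and Mt: "matching E M" and I: "invar E M s" and S: "step V E M s s'"
  shows "invar E M s'"
  using S
proof cases
  case (outer_skip f)
  then show ?thesis using skip_pres[OF I] by simp
next
  case (outer_start f)
  then show ?thesis using start_pres[OF G Mt I] by simp
next
  case (call x rest)
  then show ?thesis using call_pres[OF G Mt I] by simp
next
  case (finish x rest)
  then show ?thesis using finish_pres[OF G Mt I] by simp
next
  case (augment x R rest y)
  then show ?thesis using augment_pres[OF G Mt I] by simp
next
  case (grow x R rest y)
  then show ?thesis using grow_pres[OF G Mt I] by simp
next
  case (blossom x R rest y P us)
  then show ?thesis using blossom_pres[OF G Mt I, of x R rest y P us] by simp
next
  case (nothing x R rest y)
  then show ?thesis using nothing_pres[OF G Mt I] by simp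
qed

lemma reach_invar:
  assumes G: "graph V E" and Mt: "matching E M" and R: "(step V E M)\<^sup>*\<^sup>* init_state s"
  shows "invar E M s"
  using R
proof (induction rule: rtranclp_induct)
  case base
  then show ?case by (rule invar_init)
next
  case (step s1 s2)
  then show ?case using step_invar[OF G Mt] by blast
qed

theorem lemmaA4:
  fixes V :: "'v set" and E M :: "('v \<times> 'v) set" and s :: "'v state"
  assumes "graph V E" and "matching E M"
    and "(step V E M)\<^sup>*\<^sup>* init_state s"
    and "(x, y) \<in> E"
    and "x \<in> ev s" and "y \<in> ev s"
    and "x \<in> compl s" and "y \<in> compl s"
  shows "base s x = base s y"
proof -
  have I: "invar E M s" using reach_invar[OF assms(1,2,3)] .
  note o = invarD[OF I]
  show ?thesis
  proof (cases "(x, y) \<in> M")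
    case True
    then have m: "matched M x" "mate M x = y" using mate_eq[OF assms(2) True] unfolding matched_def by auto
    then show ?thesis using o(6) assms(5,6) unfolding iMateEv_def by auto
  next
    case False
    then have e: "(x, y) \<in> E - M" using assms(4) by simp
    have "base s x = base s y \<or> (y \<notin> compl s \<and> (\<forall>R. Scan y R \<in> set (stack s) \<longrightarrow> x \<in> R))"
      using o(15)[unfolded i1_def, rule_format, of x y] e assms(6,7) by blast
    then show ?thesis using assms(8) by blast
  qed
qed

end
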